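(* Let $A,B\in\mathcal A_n$. The following are equivalent: (1) $A\le B$ in ASM order; (2) $\mathbf x^A-\mathbf x^B$ is TNN; (3) $\mathbf x^A-\mathbf x^B$ has the SFL property.
   Context: $\mathcal A_n$ is the set of $n\times n$ alternating sign matrices (entries in $\{-1,0,1\}$, partial row and column sums in $\{0,1\}$, full row and column sums $1$). Corner sum matrix $\widetilde A(i,j)=\sum_{p\le i,q\le j}a_{pq}$; ASM order: $A\le B$ iff $\widetilde A(i,j)\ge\widetilde B(i,j)$ for all $i,j$. Let $x=(x_{ij})$ be a matrix of commuting indeterminates and $\mathbf x^A=\prod_{i,j}x_{ij}^{a_{ij}}$. A real matrix is totally nonnegative (TNN) if all its minors are nonnegative. A rational function $g(x)$ is TNN if $g(M)\ge0$ for every real $n\times n$ TNN matrix $M$ at which $g(M)$ is defined. $g$ has the subtraction-free Laurent (SFL) property if $g=F/G$ where $F$ is a polynomial with nonnegative integer coefficients in the minors of $x$ and $G$ is a product of (nonnegative integer powers of) minors of $x$. *)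

theory Defs
  imports Complex_Main "Jordan_Normal_Form.Determinant" "Jordan_Normal_Form.DL_Submatrix"
begin

text \<open>Matrices are Jordan_Normal_Form matrices; indices run over 0..n-1.\<close>

definition is_ASM :: "nat \<Rightarrow> int mat \<Rightarrow> bool" where
  "is_ASM n A \<longleftrightarrow> A \<in> carrier_mat n n
     \<and> (\<forall>i<n. \<forall>j<n. A $$ (i,j) \<in> {-1, 0, 1})
     \<and> (\<forall>i<n. \<forall>j<n. (\<Sum>q\<le>j. A $$ (i,q)) \<in> {0, 1})
     \<and> (\<forall>i<n. \<forall>j<n. (\<Sum>p\<le>i. A $$ (p,j)) \<in> {0, 1})
     \<and> (\<forall>i<n. (\<Sum>q<n. A $$ (i,q)) = 1)
     \<and> (\<forall>j<n. (\<Sum>p<n. A $$ (p,j)) = 1)"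

definition corner_sum :: "int mat \<Rightarrow> nat \<Rightarrow> nat \<Rightarrow> int" where
  "corner_sum A i j = (\<Sum>p\<le>i. \<Sum>q\<le>j. A $$ (p,q))"

definition ASM_le :: "nat \<Rightarrow> int mat \<Rightarrow> int mat \<Rightarrow> bool" where
  "ASM_le n A B \<longleftrightarrow> (\<forall>i<n. \<forall>j<n. corner_sum A i j \<ge> corner_sum B i j)"

definition valid_minor :: "nat \<Rightarrow> nat set \<Rightarrow> nat set \<Rightarrow> bool" where
  "valid_minor n I J \<longleftrightarrow> I \<subseteq> {0..<n} \<and> J \<subseteq> {0..<n} \<and> I \<noteq> {} \<and> card I = card J"

definition minor :: "real mat \<Rightarrow> nat set \<Rightarrow> nat set \<Rightarrow> real" where
  "minor M I J = det (submatrix M I J)"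

definition TNN_mat :: "nat \<Rightarrow> real mat \<Rightarrow> bool" where
  "TNN_mat n M \<longleftrightarrow> M \<in> carrier_mat n n \<and> (\<forall>I J. valid_minor n I J \<longrightarrow> minor M I J \<ge> 0)"

definition mono_eval :: "nat \<Rightarrow> int mat \<Rightarrow> real mat \<Rightarrow> real" where
  "mono_eval n A M = (\<Prod>i<n. \<Prod>j<n. (M $$ (i,j)) powi (A $$ (i,j)))"

text \<open>The rational function x^A - x^B, and where it is defined (no zero entry
  raised to a negative power).\<close>
definition diff_eval :: "nat \<Rightarrow> int mat \<Rightarrow> int mat \<Rightarrow> real mat \<Rightarrow> real" where
  "diff_eval n A B M = mono_eval n A M - mono_eval n B M"

definition diff_defined :: "nat \<Rightarrow> int mat \<Rightarrow> int mat \<Rightarrow> real mat \<Rightarrow> bool" where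
  "diff_defined n A B M \<longleftrightarrow>
     (\<forall>i<n. \<forall>j<n. (A $$ (i,j) < 0 \<or> B $$ (i,j) < 0) \<longrightarrow> M $$ (i,j) \<noteq> 0)"

definition diff_TNN :: "nat \<Rightarrow> int mat \<Rightarrow> int mat \<Rightarrow> bool" where
  "diff_TNN n A B \<longleftrightarrow>
     (\<forall>M. TNN_mat n M \<and> diff_defined n A B M \<longrightarrow> diff_eval n A B M \<ge> 0)"

text \<open>A polynomial with nonnegative integer coefficients in the minors of x:
  a list of terms (c, ms), c a coefficient, ms a list of minors (I,J) whose
  product is the monomial (repetitions give powers).\<close>
type_synonym minor_idx = "nat set \<times> nat set"

definition minor_prod :: "real mat \<Rightarrow> minor_idx list \<Rightarrow> real" where
  "minor_prod M ms = (\<Prod>(I,J)\<leftarrow>ms. minor M I J)"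

definition minor_poly :: "real mat \<Rightarrow> (nat \<times> minor_idx list) list \<Rightarrow> real" where
  "minor_poly M F = (\<Sum>(c,ms)\<leftarrow>F. real c * minor_prod M ms)"

text \<open>SFL property of x^A - x^B: it equals F/G as rational functions, i.e.
  the two agree at every real n x n matrix where both are defined.\<close>
definition diff_SFL :: "nat \<Rightarrow> int mat \<Rightarrow> int mat \<Rightarrow> bool" where
  "diff_SFL n A B \<longleftrightarrow>
     (\<exists>F G. (\<forall>(c,ms)\<in>set F. \<forall>(I,J)\<in>set ms. valid_minor n I J)
          \<and> (\<forall>(I,J)\<in>set G. valid_minor n I J)
          \<and> (\<forall>M. M \<in> carrier_mat n n \<and> diff_defined n A B M \<and> minor_prod M G \<noteq> 0
                 \<longrightarrow> diff_eval n A B M = minor_poly M F / minor_prod M G))"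

end

theory Submission
  imports Defs
begin


lemma det_add_lastrow:
  fixes A :: "'a::comm_ring_1 mat"
  assumes A: "A \<in> carrier_mat n n" and m: "m < n"
  shows "det (mat n n (\<lambda>(i,j). if i < m then A$$(i,j) + c i * A$$(m,j) else A$$(i,j))) = det A"
proof -
  define L where "L = mat n n (\<lambda>(i,l). if i = l then 1 else if l = m \<and> i < m then c i else (0::'a))"
  have L: "L \<in> carrier_mat n n" unfolding L_def by auto
  have ut: "upper_triangular L" unfolding L_def by (intro upper_triangularI) auto
  have dL: "det L = 1"
    by (subst det_upper_triangular[OF ut L], unfold prod_list_diag_prod, rule prod.neutral, auto simp: L_def)
  have eq: "L * A = mat n n (\<lambda>(i,j). if i < m then A$$(i,j) + c i * A$$(m,j) else A$$(i,j))"
  proof (rule eq_matI)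
    fix i j assume i: "i < dim_row (mat n n (\<lambda>(i,j). if i < m then A$$(i,j) + c i * A$$(m,j) else A$$(i,j)))"
      and j: "j < dim_col (mat n n (\<lambda>(i,j). if i < m then A$$(i,j) + c i * A$$(m,j) else A$$(i,j)))"
    hence i: "i < n" and j: "j < n" by auto
    have "(L * A) $$ (i,j) = (\<Sum>l<n. L $$ (i,l) * A $$ (l,j))"
      using i j L A by (auto simp: scalar_prod_def atLeast0LessThan)
    also have "\<dots> = (\<Sum>l<n. (if l = i then A$$(i,j) else 0) + (if l = m \<and> i < m then c i * A$$(m,j) else 0))"
    proof (rule sum.cong[OF refl])
      fix l assume "l \<in> {..<n}" hence l: "l < n" by auto
      show "L $$ (i,l) * A $$ (l,j) = (if l = i then A$$(i,j) else 0) + (if l = m \<and> i < m then c i * A$$(m,j) else 0)"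
        unfolding L_def using i l by auto
    qed
    also have "\<dots> = (if i < m then A$$(i,j) + c i * A$$(m,j) else A$$(i,j))"
      using i m by (simp add: sum.distrib)
    finally show "(L * A) $$ (i,j) = mat n n (\<lambda>(i,j). if i < m then A$$(i,j) + c i * A$$(m,j) else A$$(i,j)) $$ (i,j)"
      using i j by simp
  qed (use L A in auto)
  have "det (L * A) = det L * det A" by (rule det_mult[OF L A])
  thus ?thesis using eq dL by simp
qed

lemma det_add_lastcol:
  fixes A :: "'a::comm_ring_1 mat"
  assumes A: "A \<in> carrier_mat n n" and m: "m < n"
  shows "det (mat n n (\<lambda>(i,j). if j < m then A$$(i,j) + c j * A$$(i,m) else A$$(i,j))) = det A"
proof -
  have AT: "A\<^sup>T \<in> carrier_mat n n" using A by auto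
  have "mat n n (\<lambda>(i,j). if j < m then A$$(i,j) + c j * A$$(i,m) else A$$(i,j)) =
        (mat n n (\<lambda>(i,j). if i < m then A\<^sup>T$$(i,j) + c i * A\<^sup>T$$(m,j) else A\<^sup>T$$(i,j)))\<^sup>T"
    using A m by (auto intro!: eq_matI)
  hence "det (mat n n (\<lambda>(i,j). if j < m then A$$(i,j) + c j * A$$(i,m) else A$$(i,j))) =
     det (mat n n (\<lambda>(i,j). if i < m then A\<^sup>T$$(i,j) + c i * A\<^sup>T$$(m,j) else A\<^sup>T$$(i,j)))"
    by (simp add: det_transpose[of _ n])
  also have "\<dots> = det A\<^sup>T" by (rule det_add_lastrow[OF AT m])
  also have "\<dots> = det A" using A by (simp add: det_transpose)
  finally show ?thesis .
qed

lemma det_scale_rc: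
  fixes X :: "nat \<Rightarrow> nat \<Rightarrow> 'a::comm_ring_1"
  shows "det (mat n n (\<lambda>(i,j). r i * s j * X i j)) = (\<Prod>i<n. r i) * (\<Prod>j<n. s j) * det (mat n n (\<lambda>(i,j). X i j))"
proof -
  have "det (mat n n (\<lambda>(i,j). r i * s j * X i j)) =
     (\<Sum>p\<in>{p. p permutes {0..<n}}. signof p * (\<Prod>i=0..<n. r i * s (p i) * X i (p i)))"
    by (subst det_def'[of _ n]) (auto intro!: sum.cong prod.cong)
  also have "\<dots> = (\<Sum>p\<in>{p. p permutes {0..<n}}. (\<Prod>i<n. r i) * (\<Prod>j<n. s j) * (signof p * (\<Prod>i=0..<n. X i (p i))))"
  proof (rule sum.cong[OF refl])
    fix p assume "p \<in> {p. p permutes {0..<n}}"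
    hence p: "p permutes {0..<n}" by auto
    have "(\<Prod>i=0..<n. s (p i)) = (\<Prod>j=0..<n. s j)"
      using prod.permute[OF p, of s] by (simp add: comp_def)
    hence "(\<Prod>i=0..<n. r i * s (p i) * X i (p i)) = (\<Prod>i<n. r i) * (\<Prod>j<n. s j) * (\<Prod>i=0..<n. X i (p i))"
      by (simp add: prod.distrib atLeast0LessThan)
    thus "signof p * (\<Prod>i=0..<n. r i * s (p i) * X i (p i)) = (\<Prod>i<n. r i) * (\<Prod>j<n. s j) * (signof p * (\<Prod>i=0..<n. X i (p i)))"
      by (simp add: ac_simps)
  qed
  also have "\<dots> = (\<Prod>i<n. r i) * (\<Prod>j<n. s j) * det (mat n n (\<lambda>(i,j). X i j))"
    by (subst det_def'[of _ n]) (auto simp: sum_distrib_left intro!: sum.cong prod.cong)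
  finally show ?thesis .
qed

lemma det_lastrow_unit:
  fixes X :: "nat \<Rightarrow> nat \<Rightarrow> 'a::comm_ring_1"
  assumes "\<And>j. j < k \<Longrightarrow> X k j = 0" and "X k k = 1"
  shows "det (mat (Suc k) (Suc k) (\<lambda>(i,j). X i j)) = det (mat k k (\<lambda>(i,j). X i j))"
proof -
  let ?X = "mat (Suc k) (Suc k) (\<lambda>(i,j). X i j)"
  have C: "?X \<in> carrier_mat (Suc k) (Suc k)" by auto
  have "det ?X = (\<Sum>j<Suc k. ?X $$ (k,j) * cofactor ?X k j)" by (rule laplace_expansion_row[OF C], simp)
  also have "\<dots> = cofactor ?X k k" using assms by (simp add: lessThan_Suc)
  also have "\<dots> = det (mat_delete ?X k k)" by (simp add: cofactor_def)
  also have "mat_delete ?X k k = mat k k (\<lambda>(i,j). X i j)"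
    by (auto simp: mat_delete_def intro!: eq_matI)
  finally show ?thesis .
qed



lemma frac_diff: "(x::real) \<noteq> 0 \<Longrightarrow> y \<noteq> 0 \<Longrightarrow> 1/x + -1 * (1/y) = (y - x) * (1/y) * (1/x)"
  by (simp add: field_simps)

lemma frac_diff2: "(x::real) \<noteq> 0 \<Longrightarrow> y \<noteq> 0 \<Longrightarrow> 1/x - 1/y = (y - x) / (x * y)"
  by (simp add: field_simps)

lemma cauchy_det_pos:
  fixes a b :: "nat \<Rightarrow> real"
  assumes "\<And>p. p < k \<Longrightarrow> 0 < a p" "\<And>q. q < k \<Longrightarrow> 0 < b q"
    "\<And>p q. p < q \<Longrightarrow> q < k \<Longrightarrow> a p < a q" "\<And>p q. p < q \<Longrightarrow> q < k \<Longrightarrow> b p < b q"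
  shows "det (mat k k (\<lambda>(p,q). 1 / (a p + b q))) > 0"
  using assms
proof (induction k)
  case 0
  then show ?case by (simp add: det_dim_zero[of _])
next
  case (Suc k)
  have apos: "\<And>p. p \<le> k \<Longrightarrow> 0 < a p" and bpos: "\<And>q. q \<le> k \<Longrightarrow> 0 < b q" using Suc.prems by auto
  have IH: "det (mat k k (\<lambda>(p,q). 1 / (a p + b q))) > 0"
    by (rule Suc.IH) (use Suc.prems in auto)
  define C where "C = mat (Suc k) (Suc k) (\<lambda>(p,q). 1 / (a p + b q))"
  have C: "C \<in> carrier_mat (Suc k) (Suc k)" unfolding C_def by auto
  define r where "r i = (if i < k then a k - a i else 1)" for i
  define s where "s j = 1 / (a k + b j)" for j
  define X1 where "X1 i j = (if i < k then 1 / (a i + b j) else 1)" for i j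
  have "det C = det (mat (Suc k) (Suc k) (\<lambda>(i,j). if i < k then C$$(i,j) + (\<lambda>_. -1) i * C$$(k,j) else C$$(i,j)))"
    by (rule det_add_lastrow[OF C, symmetric]) simp
  also have "mat (Suc k) (Suc k) (\<lambda>(i,j). if i < k then C$$(i,j) + (\<lambda>_. -1) i * C$$(k,j) else C$$(i,j))
     = mat (Suc k) (Suc k) (\<lambda>(i,j). r i * s j * X1 i j)"
  proof (rule eq_matI)
    fix i j assume "i < dim_row (mat (Suc k) (Suc k) (\<lambda>(i,j). r i * s j * X1 i j))"
      "j < dim_col (mat (Suc k) (Suc k) (\<lambda>(i,j). r i * s j * X1 i j))"
    hence i: "i \<le> k" and j: "j \<le> k" by auto
    have pj: "0 < a k + b j" "0 < a i + b j" using apos bpos i j by (auto intro: add_pos_pos)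
    show "mat (Suc k) (Suc k) (\<lambda>(i,j). if i < k then C$$(i,j) + (\<lambda>_. -1) i * C$$(k,j) else C$$(i,j)) $$ (i,j)
       = mat (Suc k) (Suc k) (\<lambda>(i,j). r i * s j * X1 i j) $$ (i,j)"
      using i j pj by (cases "i < k") (auto simp: C_def r_def s_def X1_def frac_diff frac_diff2)
  qed auto
  also have "det \<dots> = (\<Prod>i<Suc k. r i) * (\<Prod>j<Suc k. s j) * det (mat (Suc k) (Suc k) (\<lambda>(i,j). X1 i j))"
    by (rule det_scale_rc)
  finally have e1: "det C = (\<Prod>i<Suc k. r i) * (\<Prod>j<Suc k. s j) * det (mat (Suc k) (Suc k) (\<lambda>(i,j). X1 i j))" .
  define X1m where "X1m = mat (Suc k) (Suc k) (\<lambda>(i,j). X1 i j)"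
  have X1m: "X1m \<in> carrier_mat (Suc k) (Suc k)" unfolding X1m_def by auto
  define r' where "r' i = (if i < k then 1 / (a i + b k) else 1)" for i
  define s' where "s' j = (if j < k then b k - b j else 1)" for j
  define X3 where "X3 i j = (if i < k then (if j < k then 1 / (a i + b j) else 1) else (if j < k then 0 else 1))" for i j
  have "det X1m = det (mat (Suc k) (Suc k) (\<lambda>(i,j). if j < k then X1m$$(i,j) + (\<lambda>_. -1) j * X1m$$(i,k) else X1m$$(i,j)))"
    by (rule det_add_lastcol[OF X1m, symmetric]) simp
  also have "mat (Suc k) (Suc k) (\<lambda>(i,j). if j < k then X1m$$(i,j) + (\<lambda>_. -1) j * X1m$$(i,k) else X1m$$(i,j))
     = mat (Suc k) (Suc k) (\<lambda>(i,j). r' i * s' j * X3 i j)"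
  proof (rule eq_matI)
    fix i j assume "i < dim_row (mat (Suc k) (Suc k) (\<lambda>(i,j). r' i * s' j * X3 i j))"
      "j < dim_col (mat (Suc k) (Suc k) (\<lambda>(i,j). r' i * s' j * X3 i j))"
    hence i: "i \<le> k" and j: "j \<le> k" by auto
    have pj: "0 < a i + b k" "0 < a i + b j" using apos bpos i j by (auto intro: add_pos_pos)
    show "mat (Suc k) (Suc k) (\<lambda>(i,j). if j < k then X1m$$(i,j) + (\<lambda>_. -1) j * X1m$$(i,k) else X1m$$(i,j)) $$ (i,j)
       = mat (Suc k) (Suc k) (\<lambda>(i,j). r' i * s' j * X3 i j) $$ (i,j)"
      using i j pj by (cases "i < k"; cases "j < k") (auto simp: X1m_def X1_def r'_def s'_def X3_def frac_diff frac_diff2)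
  qed auto
  also have "det \<dots> = (\<Prod>i<Suc k. r' i) * (\<Prod>j<Suc k. s' j) * det (mat (Suc k) (Suc k) (\<lambda>(i,j). X3 i j))"
    by (rule det_scale_rc)
  also have "det (mat (Suc k) (Suc k) (\<lambda>(i,j). X3 i j)) = det (mat k k (\<lambda>(i,j). X3 i j))"
    by (rule det_lastrow_unit) (auto simp: X3_def)
  also have "mat k k (\<lambda>(i,j). X3 i j) = mat k k (\<lambda>(p,q). 1 / (a p + b q))"
    by (auto simp: X3_def intro!: eq_matI)
  finally have e2: "det X1m = (\<Prod>i<Suc k. r' i) * (\<Prod>j<Suc k. s' j) * det (mat k k (\<lambda>(p,q). 1 / (a p + b q)))" .
  have p1: "(\<Prod>i<Suc k. r i) > 0" 
    by (rule prod_pos) (use Suc.prems in \<open>auto simp: r_def\<close>)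
  have p2: "(\<Prod>i<Suc k. s i) > 0" 
    by (rule prod_pos) (use apos bpos in \<open>auto simp: s_def intro!: add_pos_pos\<close>)
  have p3: "(\<Prod>i<Suc k. r' i) > 0" 
    by (rule prod_pos) (use apos bpos in \<open>auto simp: r'_def intro!: add_pos_pos\<close>)
  have p4: "(\<Prod>i<Suc k. s' i) > 0" 
    by (rule prod_pos) (use Suc.prems in \<open>auto simp: s'_def\<close>)
  show ?case using e1 e2 p1 p2 p3 p4 IH unfolding C_def X1m_def by simp
qed



lemma card_lt_I: "I \<subseteq> {0..<n} \<Longrightarrow> {i. i < n \<and> i \<in> I} = I" by auto

lemma submatrix_mat:
  assumes "I \<subseteq> {0..<n}" "J \<subseteq> {0..<n}"
  shows "submatrix (mat n n f) I J = mat (card I) (card J) (\<lambda>(p,q). f (pick I p, pick J q))"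
proof -
  have e1: "{i. i < dim_row (mat n n f) \<and> i \<in> I} = I" and e2: "{i. i < dim_col (mat n n f) \<and> i \<in> J} = J"
    using assms by auto
  have fin: "finite I" "finite J" using assms finite_subset by auto
  show ?thesis
  proof (rule eq_matI)
    fix i j assume "i < dim_row (mat (card I) (card J) (\<lambda>(p,q). f (pick I p, pick J q)))"
      "j < dim_col (mat (card I) (card J) (\<lambda>(p,q). f (pick I p, pick J q)))"
    hence i: "i < card I" and j: "j < card J" by auto
    have pi: "pick I i < n" using pick_in_set_le[OF i] assms by auto
    have pj: "pick J j < n" using pick_in_set_le[OF j] assms by auto
    show "submatrix (mat n n f) I J $$ (i,j) = mat (card I) (card J) (\<lambda>(p,q). f (pick I p, pick J q)) $$ (i,j)"
      using submatrix_index[of i "mat n n f" I j J] e1 e2 i j pi pj by simp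
  qed (use e1 e2 in \<open>auto simp: dim_submatrix\<close>)
qed

definition cauchy_mat :: "nat \<Rightarrow> (nat \<Rightarrow> real) \<Rightarrow> (nat \<Rightarrow> real) \<Rightarrow> real mat" where
  "cauchy_mat n a b = mat n n (\<lambda>(p,q). 1 / (a p + b q))"

lemma cauchy_minor_pos:
  fixes a b :: "nat \<Rightarrow> real"
  assumes "\<And>p. p < n \<Longrightarrow> 0 < a p" "\<And>q. q < n \<Longrightarrow> 0 < b q"
    "\<And>p q. p < q \<Longrightarrow> q < n \<Longrightarrow> a p < a q" "\<And>p q. p < q \<Longrightarrow> q < n \<Longrightarrow> b p < b q"
    and v: "valid_minor n I J"
  shows "minor (cauchy_mat n a b) I J > 0"
proof -
  from v have I: "I \<subseteq> {0..<n}" and J: "J \<subseteq> {0..<n}" and c: "card I = card J"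
    unfolding valid_minor_def by auto
  let ?k = "card I"
  have pI: "\<And>p. p < ?k \<Longrightarrow> pick I p < n" using pick_in_set_le I by fastforce
  have pJ: "\<And>p. p < ?k \<Longrightarrow> pick J p < n" using pick_in_set_le J c by fastforce
  have "minor (cauchy_mat n a b) I J = det (mat ?k ?k (\<lambda>(p,q). 1 / ((a \<circ> pick I) p + (b \<circ> pick J) q)))"
    unfolding minor_def cauchy_mat_def submatrix_mat[OF I J] c by (simp add: case_prod_beta)
  also have "\<dots> > 0"
  proof (rule cauchy_det_pos)
    fix p q assume "p < q" "q < ?k"
    thus "(a \<circ> pick I) p < (a \<circ> pick I) q" using assms(3) pick_mono_le[of q I p] pI by auto
  next
    fix p q assume "p < q" "q < ?k"
    thus "(b \<circ> pick J) p < (b \<circ> pick J) q" using assms(4) pick_mono_le[of q J p] pJ c by auto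
  qed (use assms pI pJ in auto)
  finally show ?thesis .
qed

lemma cauchy_TNN:
  fixes a b :: "nat \<Rightarrow> real"
  assumes "\<And>p. p < n \<Longrightarrow> 0 < a p" "\<And>q. q < n \<Longrightarrow> 0 < b q"
    "\<And>p q. p < q \<Longrightarrow> q < n \<Longrightarrow> a p < a q" "\<And>p q. p < q \<Longrightarrow> q < n \<Longrightarrow> b p < b q"
  shows "TNN_mat n (cauchy_mat n a b)"
  unfolding TNN_mat_def using cauchy_minor_pos[OF assms] by (auto simp: cauchy_mat_def less_imp_le)



definition S :: "int mat \<Rightarrow> nat \<Rightarrow> nat \<Rightarrow> int" where
  "S A u v = (\<Sum>p<u. \<Sum>q<v. A $$ (p,q))"

lemma corner_S: "corner_sum A i j = S A (Suc i) (Suc j)"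
  unfolding corner_sum_def S_def by (simp add: lessThan_Suc_atMost)

lemma S_entry: "A $$ (p,q) = S A (Suc p) (Suc q) - S A p (Suc q) - S A (Suc p) q + S A p q"
  unfolding S_def by (simp add: sum.distrib)

lemma S_zero: "S A 0 v = 0" "S A u 0 = 0" unfolding S_def by auto

lemma ASM_S_row: assumes "is_ASM n A" "v \<le> n" shows "S A n v = int v"
proof -
  have "S A n v = (\<Sum>q<v. \<Sum>p<n. A $$ (p,q))" unfolding S_def by (rule sum.swap)
  also have "\<dots> = (\<Sum>q<v. 1)" using assms unfolding is_ASM_def by (intro sum.cong) auto
  finally show ?thesis by simp
qed

lemma ASM_S_col: assumes "is_ASM n A" "u \<le> n" shows "S A u n = int u"
proof -
  have "S A u n = (\<Sum>p<u. 1)" using assms unfolding is_ASM_def S_def by (intro sum.cong) auto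
  thus ?thesis by simp
qed

definition Dm :: "nat \<Rightarrow> nat \<Rightarrow> nat \<Rightarrow> nat \<Rightarrow> int" where
  "Dm r s p q = (if p = r \<and> q = Suc s then 1 else 0) + (if p = Suc r \<and> q = s then 1 else 0)
     - (if p = r \<and> q = s then 1 else 0) - (if p = Suc r \<and> q = Suc s then 1 else 0)"

lemma sum_delta2: "(\<Sum>r<(N::nat). \<Sum>s<N. f r s * (if r = x \<and> s = y then 1 else (0::int))) = (if x < N \<and> y < N then f x y else 0)"
proof -
  have "(\<Sum>r<N. \<Sum>s<N. f r s * (if r = x \<and> s = y then 1 else (0::int))) =
        (\<Sum>r<N. if r = x then (if y < N then f x y else 0) else 0)"
  proof (intro sum.cong refl)
    fix r assume "r \<in> {..<N}"
    have "(\<Sum>s<N. f r s * (if r = x \<and> s = y then 1 else (0::int))) = (\<Sum>s<N. if s = y then (if r = x then f r s else 0) else 0)"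
      by (intro sum.cong) auto
    also have "\<dots> = (if y < N then (if r = x then f r y else 0) else 0)" by (simp add: sum.delta)
    finally show "(\<Sum>s<N. f r s * (if r = x \<and> s = y then 1 else (0::int))) = (if r = x then (if y < N then f x y else 0) else 0)"
      by auto
  qed
  also have "\<dots> = (if x < N \<and> y < N then f x y else 0)" by (simp add: sum.delta)
  finally show ?thesis .
qed

lemma exp_decomp:
  assumes A: "is_ASM n A" and B: "is_ASM n B" and p: "p < n" and q: "q < n"
  shows "B $$ (p,q) = A $$ (p,q) + (\<Sum>r<n-1. \<Sum>s<n-1. (corner_sum A r s - corner_sum B r s) * Dm r s p q)"
proof -
  define d where "d u v = S A u v - S B u v" for u v
  have d0: "d 0 v = 0" "d u 0 = 0" for u v unfolding d_def by (auto simp: S_zero)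
  have dn1: "v \<le> n \<Longrightarrow> d n v = 0" for v unfolding d_def using ASM_S_row[OF A] ASM_S_row[OF B] by auto
  have dn2: "u \<le> n \<Longrightarrow> d u n = 0" for u unfolding d_def using ASM_S_col[OF A] ASM_S_col[OF B] by auto
  let ?N = "n - 1"
  have split: "(\<Sum>r<?N. \<Sum>s<?N. (corner_sum A r s - corner_sum B r s) * Dm r s p q) =
     (\<Sum>r<?N. \<Sum>s<?N. d (Suc r) (Suc s) * (if r = p \<and> s = q - 1 \<and> q \<noteq> 0 then 1 else 0))
   + (\<Sum>r<?N. \<Sum>s<?N. d (Suc r) (Suc s) * (if r = p - 1 \<and> p \<noteq> 0 \<and> s = q then 1 else 0))
   - (\<Sum>r<?N. \<Sum>s<?N. d (Suc r) (Suc s) * (if r = p \<and> s = q then 1 else 0))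
   - (\<Sum>r<?N. \<Sum>s<?N. d (Suc r) (Suc s) * (if r = p - 1 \<and> p \<noteq> 0 \<and> s = q - 1 \<and> q \<noteq> 0 then 1 else 0))"
  proof -
    have pt: "(corner_sum A r s - corner_sum B r s) * Dm r s p q =
       d (Suc r) (Suc s) * (if r = p \<and> s = q - 1 \<and> q \<noteq> 0 then 1 else 0)
     + d (Suc r) (Suc s) * (if r = p - 1 \<and> p \<noteq> 0 \<and> s = q then 1 else 0)
     - d (Suc r) (Suc s) * (if r = p \<and> s = q then 1 else 0)
     - d (Suc r) (Suc s) * (if r = p - 1 \<and> p \<noteq> 0 \<and> s = q - 1 \<and> q \<noteq> 0 then 1 else 0)" for r s
    proof -
      have e1: "(p = r \<and> q = Suc s) = (r = p \<and> s = q - 1 \<and> q \<noteq> 0)" by auto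
      have e2: "(p = Suc r \<and> q = s) = (r = p - 1 \<and> p \<noteq> 0 \<and> s = q)" by auto
      have e3: "(p = r \<and> q = s) = (r = p \<and> s = q)" by auto
      have e4: "(p = Suc r \<and> q = Suc s) = (r = p - 1 \<and> p \<noteq> 0 \<and> s = q - 1 \<and> q \<noteq> 0)" by auto
      have cd: "corner_sum A r s - corner_sum B r s = d (Suc r) (Suc s)" unfolding corner_S d_def ..
      show ?thesis unfolding Dm_def e1 e2 e3 e4 cd by (simp add: algebra_simps)
    qed
    show ?thesis unfolding pt by (simp only: sum.distrib sum_subtractf)
  qed
  have t1: "(\<Sum>r<?N. \<Sum>s<?N. d (Suc r) (Suc s) * (if r = p \<and> s = q - 1 \<and> q \<noteq> 0 then 1 else 0)) = d (Suc p) q"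
  proof (cases "q = 0")
    case True thus ?thesis by (simp add: d0)
  next
    case False
    have "(\<Sum>r<?N. \<Sum>s<?N. d (Suc r) (Suc s) * (if r = p \<and> s = q - 1 \<and> q \<noteq> 0 then 1 else 0))
       = (\<Sum>r<?N. \<Sum>s<?N. d (Suc r) (Suc s) * (if r = p \<and> s = q - 1 then 1 else 0))" using False by simp
    also have "\<dots> = (if p < ?N \<and> q - 1 < ?N then d (Suc p) (Suc (q - 1)) else 0)" by (rule sum_delta2)
    also have "\<dots> = d (Suc p) q" using False p q dn1[of q] by (cases "Suc p = n") auto
    finally show ?thesis .
  qed
  have t2: "(\<Sum>r<?N. \<Sum>s<?N. d (Suc r) (Suc s) * (if r = p - 1 \<and> p \<noteq> 0 \<and> s = q then 1 else 0)) = d p (Suc q)"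
  proof (cases "p = 0")
    case True thus ?thesis by (simp add: d0)
  next
    case False
    have "(\<Sum>r<?N. \<Sum>s<?N. d (Suc r) (Suc s) * (if r = p - 1 \<and> p \<noteq> 0 \<and> s = q then 1 else 0))
       = (\<Sum>r<?N. \<Sum>s<?N. d (Suc r) (Suc s) * (if r = p - 1 \<and> s = q then 1 else 0))" using False by simp
    also have "\<dots> = (if p - 1 < ?N \<and> q < ?N then d (Suc (p - 1)) (Suc q) else 0)" by (rule sum_delta2)
    also have "\<dots> = d p (Suc q)" using False p q dn2[of p] by (cases "Suc q = n") auto
    finally show ?thesis .
  qed
  have t3: "(\<Sum>r<?N. \<Sum>s<?N. d (Suc r) (Suc s) * (if r = p \<and> s = q then 1 else 0)) = d (Suc p) (Suc q)"
    using sum_delta2[where f="\<lambda>r s. d (Suc r) (Suc s)" and N="?N" and x=p and y=q] p q dn1[of "Suc q"] dn2[of "Suc p"]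
    by (cases "Suc p = n"; cases "Suc q = n") auto
  have t4: "(\<Sum>r<?N. \<Sum>s<?N. d (Suc r) (Suc s) * (if r = p - 1 \<and> p \<noteq> 0 \<and> s = q - 1 \<and> q \<noteq> 0 then 1 else 0)) = d p q"
  proof (cases "p = 0 \<or> q = 0")
    case True thus ?thesis by (auto simp: d0)
  next
    case False
    have "(\<Sum>r<?N. \<Sum>s<?N. d (Suc r) (Suc s) * (if r = p - 1 \<and> p \<noteq> 0 \<and> s = q - 1 \<and> q \<noteq> 0 then 1 else 0))
       = (\<Sum>r<?N. \<Sum>s<?N. d (Suc r) (Suc s) * (if r = p - 1 \<and> s = q - 1 then 1 else 0))" using False by simp
    also have "\<dots> = (if p - 1 < ?N \<and> q - 1 < ?N then d (Suc (p - 1)) (Suc (q - 1)) else 0)" by (rule sum_delta2)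
    also have "\<dots> = d p q" using False p q by auto
    finally show ?thesis .
  qed
  show ?thesis
    unfolding split t1 t2 t3 t4
    using S_entry[of A p q] S_entry[of B p q] unfolding d_def by simp
qed



definition monoE :: "nat \<Rightarrow> (nat \<Rightarrow> nat \<Rightarrow> int) \<Rightarrow> real mat \<Rightarrow> real" where
  "monoE n E M = (\<Prod>i<n. \<Prod>j<n. M $$ (i,j) powi E i j)"

definition allnz :: "nat \<Rightarrow> real mat \<Rightarrow> bool" where
  "allnz n M \<longleftrightarrow> (\<forall>i<n. \<forall>j<n. M $$ (i,j) \<noteq> 0)"

lemma mono_eval_E: "mono_eval n A M = monoE n (\<lambda>i j. A $$ (i,j)) M"
  unfolding mono_eval_def monoE_def ..

lemma monoE_cong: "(\<And>i j. i < n \<Longrightarrow> j < n \<Longrightarrow> E i j = E' i j) \<Longrightarrow> monoE n E M = monoE n E' M"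
  unfolding monoE_def by (intro prod.cong refl) auto

lemma monoE_add: "allnz n M \<Longrightarrow> monoE n (\<lambda>i j. E1 i j + E2 i j) M = monoE n E1 M * monoE n E2 M"
  unfolding monoE_def allnz_def
  by (simp add: power_int_add prod.distrib[symmetric])

lemma monoE_zero: "monoE n (\<lambda>_ _. 0) M = 1" unfolding monoE_def by simp

lemma monoE_sum:
  assumes "finite X" "allnz n M"
  shows "monoE n (\<lambda>i j. \<Sum>x\<in>X. E x i j) M = (\<Prod>x\<in>X. monoE n (E x) M)"
  using assms(1)
proof (induction X rule: finite_induct)
  case empty
  then show ?case by (simp add: monoE_zero)
next
  case (insert x F)
  have "monoE n (\<lambda>i j. \<Sum>x\<in>insert x F. E x i j) M = monoE n (\<lambda>i j. E x i j + (\<Sum>x\<in>F. E x i j)) M"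
    using insert by simp
  also have "\<dots> = monoE n (E x) M * monoE n (\<lambda>i j. \<Sum>x\<in>F. E x i j) M"
    by (rule monoE_add[OF assms(2)])
  finally show ?case using insert by simp
qed

lemma prod_powi: "finite X \<Longrightarrow> (\<Prod>x\<in>X. f x) powi c = (\<Prod>x\<in>X. (f x :: real) powi c)"
  by (induction X rule: finite_induct) (auto simp: power_int_mult_distrib)

lemma powi_swap: "(x::real) powi (c * e) = (x powi e) powi c"
  by (metis mult.commute power_int_mult)

lemma monoE_smult: "monoE n (\<lambda>i j. c * E i j) M = (monoE n E M) powi c"
  unfolding monoE_def by (simp add: prod_powi powi_swap)

lemma powi_if: "(x::real) powi (if b then e else 0) = (if b then x powi e else 1)" by simp

lemma monoE_delta:
  assumes "p < n" "q < n"
  shows "monoE n (\<lambda>i j. if i = p \<and> j = q then e else 0) M = M $$ (p,q) powi e"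
proof -
  have "monoE n (\<lambda>i j. if i = p \<and> j = q then e else 0) M = (\<Prod>i<n. if i = p then (\<Prod>j<n. if j = q then M $$ (p,q) powi e else 1) else 1)"
    unfolding monoE_def by (intro prod.cong refl) (auto simp: powi_if)
  also have "\<dots> = M $$ (p,q) powi e" using assms by (simp add: prod.delta)
  finally show ?thesis .
qed

definition yfun :: "real mat \<Rightarrow> nat \<Rightarrow> nat \<Rightarrow> real" where
  "yfun M r s = M $$ (r, Suc s) * M $$ (Suc r, s) / (M $$ (r,s) * M $$ (Suc r, Suc s))"

lemma monoE_Dm:
  assumes nz: "allnz n M" and r: "Suc r < n" and s: "Suc s < n"
  shows "monoE n (Dm r s) M = yfun M r s"
proof -
  let ?d = "\<lambda>p q e i j. if i = p \<and> j = q then e else (0::int)"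
  have "monoE n (Dm r s) M = monoE n (\<lambda>i j. ?d r (Suc s) 1 i j + ?d (Suc r) s 1 i j + ?d r s (-1) i j + ?d (Suc r) (Suc s) (-1) i j) M"
    by (rule monoE_cong) (auto simp: Dm_def)
  also have "\<dots> = monoE n (?d r (Suc s) 1) M * monoE n (?d (Suc r) s 1) M * monoE n (?d r s (-1)) M * monoE n (?d (Suc r) (Suc s) (-1)) M"
    by (simp only: monoE_add[OF nz])
  also have "\<dots> = yfun M r s"
    using r s by (simp add: monoE_delta yfun_def power_int_minus1_right field_simps)
  finally show ?thesis .
qed

lemma mono_identity:
  assumes A: "is_ASM n A" and B: "is_ASM n B" and nz: "allnz n M"
  shows "mono_eval n B M = mono_eval n A M * (\<Prod>r<n-1. \<Prod>s<n-1. (yfun M r s) powi (corner_sum A r s - corner_sum B r s))"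
proof -
  have "mono_eval n B M = monoE n (\<lambda>p q. A $$ (p,q) + (\<Sum>r<n-1. \<Sum>s<n-1. (corner_sum A r s - corner_sum B r s) * Dm r s p q)) M"
    unfolding mono_eval_E by (rule monoE_cong) (use exp_decomp[OF A B] in auto)
  also have "\<dots> = mono_eval n A M * monoE n (\<lambda>p q. \<Sum>r<n-1. \<Sum>s<n-1. (corner_sum A r s - corner_sum B r s) * Dm r s p q) M"
    unfolding mono_eval_E by (rule monoE_add[OF nz])
  also have "monoE n (\<lambda>p q. \<Sum>r<n-1. \<Sum>s<n-1. (corner_sum A r s - corner_sum B r s) * Dm r s p q) M
     = (\<Prod>r<n-1. monoE n (\<lambda>p q. \<Sum>s<n-1. (corner_sum A r s - corner_sum B r s) * Dm r s p q) M)"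
    by (rule monoE_sum[OF _ nz]) simp
  also have "\<dots> = (\<Prod>r<n-1. \<Prod>s<n-1. monoE n (\<lambda>p q. (corner_sum A r s - corner_sum B r s) * Dm r s p q) M)"
    by (intro prod.cong refl monoE_sum[OF _ nz]) simp
  also have "\<dots> = (\<Prod>r<n-1. \<Prod>s<n-1. (yfun M r s) powi (corner_sum A r s - corner_sum B r s))"
    by (intro prod.cong refl) (auto simp: monoE_smult monoE_Dm[OF nz])
  finally show ?thesis .
qed



lemma det_mat2: "det (mat 2 2 f) = f (0,0) * f (1,1) - f (0,1) * (f (1,0) :: 'a::comm_ring_1)"
proof -
  have C: "mat 2 2 f \<in> carrier_mat 2 2" by auto
  have "det (mat 2 2 f) = (\<Sum>j<2. mat 2 2 f $$ (0,j) * cofactor (mat 2 2 f) 0 j)"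
    by (rule laplace_expansion_row[OF C]) simp
  also have "\<dots> = f (0,0) * det (mat_delete (mat 2 2 f) 0 0) - f (0,1) * det (mat_delete (mat 2 2 f) 0 1)"
    by (simp add: numeral_2_eq_2 lessThan_Suc cofactor_def)
  also have "mat_delete (mat 2 2 f) 0 0 = mat 1 1 (\<lambda>_. f (1,1))" by (auto simp: mat_delete_def intro!: eq_matI)
  also have "mat_delete (mat 2 2 f) 0 1 = mat 1 1 (\<lambda>_. f (1,0))" by (auto simp: mat_delete_def intro!: eq_matI)
  finally show ?thesis by (simp add: det_single)
qed

lemma det_mat1: "det (mat 1 1 f) = (f (0,0) :: 'a::comm_ring_1)"
  by (simp add: det_single)

lemma pick_pair0: "pick {r, Suc r} 0 = r"
  by (simp, rule Least_equality) auto
lemma pick_pair1: "pick {r, Suc r} (Suc 0) = Suc r"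
  by (simp only: pick.simps(2) pick_pair0, rule Least_equality) auto
lemma pick_single: "pick {r} 0 = r"
  by (simp add: Least_equality)

lemma det_mat1s: "det (mat (Suc 0) (Suc 0) f) = (f (0,0) :: 'a::comm_ring_1)"
  using det_mat1[of f] by simp

lemma mat_of_carrier: "M \<in> carrier_mat n n \<Longrightarrow> M = mat n n (\<lambda>(i,j). M $$ (i,j))"
  by (auto intro!: eq_matI)

lemma minor_2x2:
  assumes M: "M \<in> carrier_mat n n" and r: "Suc r < n" and s: "Suc s < n"
  shows "minor M {r, Suc r} {s, Suc s} = M$$(r,s) * M$$(Suc r,Suc s) - M$$(r,Suc s) * M$$(Suc r,s)"
proof -
  have I: "{r, Suc r} \<subseteq> {0..<n}" "{s, Suc s} \<subseteq> {0..<n}" using r s by auto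
  have "minor M {r, Suc r} {s, Suc s} = det (mat 2 2 (\<lambda>(p,q). M $$ (pick {r, Suc r} p, pick {s, Suc s} q)))"
    unfolding minor_def by (subst mat_of_carrier[OF M], subst submatrix_mat[OF I]) (simp add: case_prod_beta numeral_2_eq_2)
  also have "\<dots> = M$$(r,s) * M$$(Suc r,Suc s) - M$$(r,Suc s) * M$$(Suc r,s)"
    by (simp del: pick.simps add: det_mat2 pick_pair0 pick_pair1)
  finally show ?thesis .
qed

lemma minor_1x1:
  assumes M: "M \<in> carrier_mat n n" and p: "p < n" and q: "q < n"
  shows "minor M {p} {q} = M$$(p,q)"
proof -
  have I: "{p} \<subseteq> {0..<n}" "{q} \<subseteq> {0..<n}" using p q by auto
  show ?thesis
    unfolding minor_def by (subst mat_of_carrier[OF M], subst submatrix_mat[OF I]) (simp del: pick.simps add: det_mat1s pick_single)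
qed

lemma valid_2x2: "Suc r < n \<Longrightarrow> Suc s < n \<Longrightarrow> valid_minor n {r, Suc r} {s, Suc s}"
  unfolding valid_minor_def by auto

lemma valid_1x1: "p < n \<Longrightarrow> q < n \<Longrightarrow> valid_minor n {p} {q}"
  unfolding valid_minor_def by auto

lemma monoE_pos: "(\<And>i j. i < n \<Longrightarrow> j < n \<Longrightarrow> M $$ (i,j) > 0) \<Longrightarrow> monoE n E M > 0"
  unfolding monoE_def by (intro prod_pos) auto

lemma pos_case:
  assumes A: "is_ASM n A" and B: "is_ASM n B" and le: "ASM_le n A B"
    and T: "TNN_mat n M" and pos: "\<And>i j. i < n \<Longrightarrow> j < n \<Longrightarrow> M $$ (i,j) > 0"
  shows "mono_eval n B M \<le> mono_eval n A M"
proof -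
  have nz: "allnz n M" using pos unfolding allnz_def by force
  have M: "M \<in> carrier_mat n n" using T unfolding TNN_mat_def by auto
  have Ap: "mono_eval n A M > 0" unfolding mono_eval_E by (rule monoE_pos[OF pos])
  define Y where "Y r s = (yfun M r s) powi (corner_sum A r s - corner_sum B r s)" for r s
  have fac: "0 \<le> Y r s \<and> Y r s \<le> 1" if r: "r \<in> {..<n-1}" and s: "s \<in> {..<n-1}" for r s
  proof -
    from r s have r': "Suc r < n" and s': "Suc s < n" by auto
    have m: "minor M {r, Suc r} {s, Suc s} \<ge> 0" using T valid_2x2[OF r' s'] unfolding TNN_mat_def by auto
    hence m2: "M$$(r,Suc s) * M$$(Suc r,s) \<le> M$$(r,s) * M$$(Suc r,Suc s)" unfolding minor_2x2[OF M r' s'] by simp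
    have dpos: "M$$(r,s) * M$$(Suc r,Suc s) > 0" using pos r' s' by auto
    have npos: "M$$(r,Suc s) * M$$(Suc r,s) > 0" using pos r' s' by auto
    have y0: "0 \<le> yfun M r s" and y1: "yfun M r s \<le> 1" unfolding yfun_def using m2 dpos npos by auto
    have c: "0 \<le> corner_sum A r s - corner_sum B r s" using le r' s' unfolding ASM_le_def by auto
    show ?thesis unfolding Y_def using power_int_le_one[OF y0 c y1] y0 by simp
  qed
  have P1: "(\<Prod>r<n-1. \<Prod>s<n-1. Y r s) \<le> 1"
    by (intro prod_le_1 conjI prod_nonneg) (use fac in auto)
  have "mono_eval n B M = mono_eval n A M * (\<Prod>r<n-1. \<Prod>s<n-1. Y r s)"
    unfolding Y_def by (rule mono_identity[OF A B nz])
  also have "\<dots> \<le> mono_eval n A M" using Ap P1 by (simp add: mult_left_le)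
  finally show ?thesis .
qed



lemma prod_list_upt: "prod_list (map f [0..<a]) = (\<Prod>i<a. (f i :: 'a::comm_monoid_mult))"
  by (metis atLeast0LessThan distinct_upt prod.distinct_set_conv_list set_upt)

lemma prod_list_concat: "prod_list (concat xs) = prod_list (map prod_list (xs :: 'a::comm_monoid_mult list list))"
  by (induction xs) auto

lemma prod_list_product:
  "prod_list (map f (List.product [0..<a] [0..<b])) = (\<Prod>r<a. \<Prod>s<b. (f (r,s) :: 'a::comm_monoid_mult))"
  unfolding product_concat_map map_concat prod_list_concat
  by (simp add: comp_def prod_list_upt)

lemma prod_list_filter: "prod_list (map f (filter P xs)) = prod_list (map (\<lambda>x. if P x then f x else (1::'a::comm_monoid_mult)) xs)"
  by (induction xs) auto

lemma prod_list_mult: "prod_list (map (\<lambda>x. f x * g x) xs) = prod_list (map f xs) * prod_list (map g xs :: 'a::comm_monoid_mult list)"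
  by (induction xs) (auto simp: ac_simps)

lemma prod_list_inverse: "prod_list (map (\<lambda>x. inverse (f x)) xs) = inverse (prod_list (map f xs) :: real)"
  by (induction xs) (auto simp: inverse_mult_distrib)

lemma prod_list_div: "prod_list (map (\<lambda>x. f x / g x) xs) = prod_list (map f xs) / prod_list (map g xs :: real list)"
  by (induction xs) auto

lemma minor_prod_append: "minor_prod M (xs @ ys) = minor_prod M xs * minor_prod M ys"
  unfolding minor_prod_def by simp

definition ent_idx :: "nat \<times> nat \<Rightarrow> minor_idx" where "ent_idx x = ({fst x}, {snd x})"
definition Dl :: "nat \<times> nat \<Rightarrow> minor_idx list" where
  "Dl x = [({fst x},{snd x}), ({Suc (fst x)},{Suc (snd x)})]"
definition Nl :: "nat \<times> nat \<Rightarrow> minor_idx list" where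
  "Nl x = [({fst x},{Suc (snd x)}), ({Suc (fst x)},{snd x})]"
definition det_idx :: "nat \<times> nat \<Rightarrow> minor_idx" where
  "det_idx x = ({fst x, Suc (fst x)}, {snd x, Suc (snd x)})"

definition Dv :: "real mat \<Rightarrow> nat \<times> nat \<Rightarrow> real" where
  "Dv M x = M $$ (fst x, snd x) * M $$ (Suc (fst x), Suc (snd x))"
definition Nv :: "real mat \<Rightarrow> nat \<times> nat \<Rightarrow> real" where
  "Nv M x = M $$ (fst x, Suc (snd x)) * M $$ (Suc (fst x), snd x)"

fun tel :: "(nat \<times> nat) list \<Rightarrow> minor_idx list list" where
  "tel [] = []"
| "tel (x # xs) = (det_idx x # concat (map Dl xs)) # map (\<lambda>ms. Nl x @ ms) (tel xs)"

lemma minor_prod_ent: "M \<in> carrier_mat n n \<Longrightarrow> (\<forall>x\<in>set L. fst x < n \<and> snd x < n) \<Longrightarrow>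
   minor_prod M (map ent_idx L) = prod_list (map (\<lambda>x. M $$ (fst x, snd x)) L)"
  unfolding minor_prod_def ent_idx_def by (induction L) (auto simp: minor_1x1)

lemma minor_prod_Dl: "M \<in> carrier_mat n n \<Longrightarrow> Suc (fst x) < n \<Longrightarrow> Suc (snd x) < n \<Longrightarrow> minor_prod M (Dl x) = Dv M x"
  unfolding minor_prod_def Dl_def Dv_def by (simp add: minor_1x1)

lemma minor_prod_Nl: "M \<in> carrier_mat n n \<Longrightarrow> Suc (fst x) < n \<Longrightarrow> Suc (snd x) < n \<Longrightarrow> minor_prod M (Nl x) = Nv M x"
  unfolding minor_prod_def Nl_def Nv_def by (simp add: minor_1x1)

lemma minor_prod_concat_Dl: "M \<in> carrier_mat n n \<Longrightarrow> (\<forall>x\<in>set L. Suc (fst x) < n \<and> Suc (snd x) < n) \<Longrightarrow>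
   minor_prod M (concat (map Dl L)) = prod_list (map (Dv M) L)"
  by (induction L) (auto simp: minor_prod_append minor_prod_Dl, simp add: minor_prod_def)

lemma tel_sum:
  assumes M: "M \<in> carrier_mat n n" and L: "\<forall>x\<in>set L. Suc (fst x) < n \<and> Suc (snd x) < n"
  shows "sum_list (map (minor_prod M) (tel L)) = prod_list (map (Dv M) L) - prod_list (map (Nv M) L)"
  using L
proof (induction L)
  case Nil
  then show ?case by simp
next
  case (Cons x xs)
  have x: "Suc (fst x) < n" "Suc (snd x) < n" using Cons by auto
  have dx: "minor_prod M [det_idx x] = Dv M x - Nv M x"
    unfolding det_idx_def Dv_def Nv_def
    using minor_2x2[OF M x] by (cases x) (simp add: minor_prod_def)
  have "sum_list (map (minor_prod M) (tel (x # xs))) =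
      minor_prod M (det_idx x # concat (map Dl xs)) + sum_list (map (\<lambda>ms. minor_prod M (Nl x @ ms)) (tel xs))"
    by (simp add: comp_def)
  also have "minor_prod M (det_idx x # concat (map Dl xs)) = (Dv M x - Nv M x) * prod_list (map (Dv M) xs)"
    using minor_prod_concat_Dl[OF M, of xs] Cons.prems dx minor_prod_append[of M "[det_idx x]" "concat (map Dl xs)"]
    by simp
  also have "sum_list (map (\<lambda>ms. minor_prod M (Nl x @ ms)) (tel xs)) = Nv M x * sum_list (map (minor_prod M) (tel xs))"
    by (simp add: minor_prod_append minor_prod_Nl[OF M x] sum_list_const_mult)
  also have "sum_list (map (minor_prod M) (tel xs)) = prod_list (map (Dv M) xs) - prod_list (map (Nv M) xs)"
    using Cons by auto
  finally show ?case by (simp add: algebra_simps)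
qed

lemma tel_valid: "(\<forall>x\<in>set L. Suc (fst x) < n \<and> Suc (snd x) < n) \<Longrightarrow> ms \<in> set (tel L) \<Longrightarrow> (I,J) \<in> set ms \<Longrightarrow> valid_minor n I J"
proof (induction L arbitrary: ms)
  case Nil then show ?case by simp
next
  case (Cons x xs)
  have x: "Suc (fst x) < n" "Suc (snd x) < n" using Cons.prems by auto
  from Cons.prems(2) consider "ms = det_idx x # concat (map Dl xs)" | ms' where "ms' \<in> set (tel xs)" "ms = Nl x @ ms'"
    by auto
  then show ?case
  proof cases
    case 1
    then show ?thesis using Cons.prems(1,3) x
      by (auto simp: det_idx_def Dl_def valid_minor_def)
  next
    case 2
    then show ?thesis using Cons.IH[of ms'] Cons.prems x
      by (auto simp: Nl_def valid_minor_def)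
  qed
qed



lemma ASM_entry: "is_ASM n A \<Longrightarrow> p < n \<Longrightarrow> q < n \<Longrightarrow> A $$ (p,q) \<in> {-1,0,1}"
  unfolding is_ASM_def by auto

lemma mono_eval_ratio:
  assumes A: "is_ASM n A" and nz: "allnz n M"
  defines "EL \<equiv> List.product [0..<n] [0..<n]"
  shows "mono_eval n A M = prod_list (map (\<lambda>x. M $$ x) (filter (\<lambda>x. A $$ x = 1) EL)) /
          prod_list (map (\<lambda>x. M $$ x) (filter (\<lambda>x. A $$ x = -1) EL))"
proof -
  have "mono_eval n A M = prod_list (map (\<lambda>x. M $$ x powi A $$ x) EL)"
    unfolding mono_eval_def EL_def by (subst prod_list_product) simp
  also have "\<dots> = prod_list (map (\<lambda>x. (if A $$ x = 1 then M $$ x else 1) * inverse (if A $$ x = -1 then M $$ x else 1)) EL)"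
  proof (intro arg_cong[where f=prod_list] map_cong refl)
    fix x assume "x \<in> set EL"
    then obtain p q where x: "x = (p,q)" "p < n" "q < n" unfolding EL_def by auto
    have "A $$ x \<in> {-1,0,1}" using ASM_entry[OF A x(2,3)] x by simp
    thus "M $$ x powi A $$ x = (if A $$ x = 1 then M $$ x else 1) * inverse (if A $$ x = -1 then M $$ x else 1)"
      by (auto simp: power_int_minus1_right)
  qed
  also have "\<dots> = prod_list (map (\<lambda>x. M $$ x) (filter (\<lambda>x. A $$ x = 1) EL)) /
          prod_list (map (\<lambda>x. M $$ x) (filter (\<lambda>x. A $$ x = -1) EL))"
    unfolding prod_list_mult prod_list_filter prod_list_inverse[symmetric] divide_inverse
    by (simp add: if_distrib[of inverse] cong: if_cong)
  finally show ?thesis .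
qed

lemma prod_list_rep:
  "prod_list (map f (concat (map (\<lambda>x. replicate (k x) x) L))) = prod_list (map (\<lambda>x. f x ^ k x) (L :: 'b list)) "
  for f :: "'b \<Rightarrow> real"
  by (induction L) (auto simp: prod_list_replicate)

lemma le_imp_SFL:
  assumes A: "is_ASM n A" and B: "is_ASM n B" and le: "ASM_le n A B"
  shows "diff_SFL n A B"
proof -
  define EL where "EL = List.product [0..<n] [0..<n]"
  define PL where "PL = List.product [0..<n-1] [0..<n-1]"
  define c where "c r s = corner_sum A r s - corner_sum B r s" for r s
  define K where "K = concat (map (\<lambda>x. replicate (nat (c (fst x) (snd x))) x) PL)"
  define Apos where "Apos = filter (\<lambda>x. A $$ x = 1) EL"
  define Aneg where "Aneg = filter (\<lambda>x. A $$ x = -1) EL"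
  define F where "F = map (\<lambda>ms. (1::nat, map ent_idx Apos @ ms @ map ent_idx EL)) (tel K)"
  define G where "G = map ent_idx Aneg @ concat (map Dl K) @ map ent_idx EL"
  have ELr: "\<forall>x\<in>set EL. fst x < n \<and> snd x < n" unfolding EL_def by auto
  have Kr: "\<forall>x\<in>set K. Suc (fst x) < n \<and> Suc (snd x) < n" unfolding K_def PL_def by auto
  have Aposr: "\<forall>x\<in>set Apos. fst x < n \<and> snd x < n" unfolding Apos_def using ELr by auto
  have Anegr: "\<forall>x\<in>set Aneg. fst x < n \<and> snd x < n" unfolding Aneg_def using ELr by auto
  have vent: "\<forall>x\<in>set L. fst x < n \<and> snd x < n \<Longrightarrow> (I,J) \<in> set (map ent_idx L) \<Longrightarrow> valid_minor n I J" for L I J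
    by (auto simp: ent_idx_def valid_minor_def)
  have vDl: "(I,J) \<in> set (concat (map Dl K)) \<Longrightarrow> valid_minor n I J" for I J
    using Kr by (auto simp: Dl_def valid_minor_def)
  have vF: "\<forall>(c,ms)\<in>set F. \<forall>(I,J)\<in>set ms. valid_minor n I J"
    unfolding F_def using vent[OF Aposr] vent[OF ELr] tel_valid[OF Kr] by fastforce
  have vG: "\<forall>(I,J)\<in>set G. valid_minor n I J"
    unfolding G_def using vent[OF Anegr] vent[OF ELr] vDl by fastforce
  show ?thesis unfolding diff_SFL_def
  proof (intro exI conjI allI impI)
    show "\<forall>(c,ms)\<in>set F. \<forall>(I,J)\<in>set ms. valid_minor n I J" by (rule vF)
    show "\<forall>(I,J)\<in>set G. valid_minor n I J" by (rule vG)
    fix M assume H: "M \<in> carrier_mat n n \<and> diff_defined n A B M \<and> minor_prod M G \<noteq> 0"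
    hence M: "M \<in> carrier_mat n n" and G0: "minor_prod M G \<noteq> 0" by auto
    define ent where "ent x = M $$ (fst x, snd x)" for x
    have entx: "(\<lambda>x. M $$ x) = ent" unfolding ent_def by auto
    have entx2: "(($$) M) = ent" unfolding ent_def by auto
    define Pp where "Pp = prod_list (map ent Apos)"
    define Pn where "Pn = prod_list (map ent Aneg)"
    define Pa where "Pa = prod_list (map ent EL)"
    define PD where "PD = prod_list (map (Dv M) K)"
    define PN where "PN = prod_list (map (Nv M) K)"
    have Gval: "minor_prod M G = Pn * PD * Pa"
      unfolding G_def minor_prod_append Pn_def PD_def Pa_def
      by (simp add: minor_prod_ent[OF M Anegr] minor_prod_ent[OF M ELr] minor_prod_concat_Dl[OF M Kr] entx2)
    have Fval: "minor_poly M F = Pp * Pa * (PD - PN)"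
    proof -
      have "minor_poly M F = sum_list (map (\<lambda>ms. minor_prod M (map ent_idx Apos @ ms @ map ent_idx EL)) (tel K))"
        unfolding minor_poly_def F_def by (simp add: comp_def)
      also have "\<dots> = sum_list (map (\<lambda>ms. Pp * Pa * minor_prod M ms) (tel K))"
        by (intro arg_cong[where f=sum_list] map_cong refl)
          (simp add: minor_prod_append minor_prod_ent[OF M Aposr] minor_prod_ent[OF M ELr] Pp_def Pa_def entx2)
      also have "\<dots> = Pp * Pa * (PD - PN)"
        unfolding sum_list_const_mult PD_def PN_def by (simp add: tel_sum[OF M Kr] comp_def)
      finally show ?thesis .
    qed
    have Pa0: "Pa \<noteq> 0" and Pn0: "Pn \<noteq> 0" and PD0: "PD \<noteq> 0" using G0 Gval by auto
    have nz: "allnz n M"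
    proof -
      have "Pa = (\<Prod>r<n. \<Prod>s<n. M $$ (r,s))" unfolding Pa_def EL_def
        by (subst prod_list_product) (simp add: ent_def)
      thus ?thesis using Pa0 unfolding allnz_def by auto
    qed
    have xA: "mono_eval n A M = Pp / Pn"
      using mono_eval_ratio[OF A nz] unfolding Pp_def Pn_def Apos_def Aneg_def EL_def entx .
    have cnn: "0 \<le> c r s" if "r < n - 1" "s < n - 1" for r s
      using le that unfolding ASM_le_def c_def by auto
    have yK: "prod_list (map (\<lambda>x. yfun M (fst x) (snd x)) K) = (\<Prod>r<n-1. \<Prod>s<n-1. (yfun M r s) powi (c r s))"
    proof -
      have "prod_list (map (\<lambda>x. yfun M (fst x) (snd x)) K) = prod_list (map (\<lambda>x. yfun M (fst x) (snd x) ^ nat (c (fst x) (snd x))) PL)"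
        unfolding K_def by (rule prod_list_rep)
      also have "\<dots> = (\<Prod>r<n-1. \<Prod>s<n-1. yfun M r s ^ nat (c r s))"
        unfolding PL_def by (subst prod_list_product) simp
      also have "\<dots> = (\<Prod>r<n-1. \<Prod>s<n-1. (yfun M r s) powi (c r s))"
        by (intro prod.cong refl) (use cnn in \<open>auto simp: power_int_def\<close>)
      finally show ?thesis .
    qed
    have yK2: "prod_list (map (\<lambda>x. yfun M (fst x) (snd x)) K) = PN / PD"
      unfolding PN_def PD_def prod_list_div[symmetric]
      by (intro arg_cong[where f=prod_list] map_cong refl) (auto simp: yfun_def Nv_def Dv_def)
    have xB: "mono_eval n B M = Pp / Pn * (PN / PD)"
      using mono_identity[OF A B nz] xA yK yK2 unfolding c_def by simp
    show "diff_eval n A B M = minor_poly M F / minor_prod M G"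
      unfolding diff_eval_def xA xB Fval Gval using Pa0 Pn0 PD0
      by (simp add: field_simps)
  qed
qed



lemma tendsto_powi_gen:
  fixes f :: "'a \<Rightarrow> real"
  assumes "(f \<longlongrightarrow> a) F" "a \<noteq> 0 \<or> 0 \<le> e"
  shows "((\<lambda>x. f x powi e) \<longlongrightarrow> a powi e) F"
proof (cases "a \<noteq> 0")
  case True then show ?thesis using assms by (intro tendsto_power_int) auto
next
  case False
  hence e: "0 \<le> e" using assms by auto
  have "((\<lambda>x. f x ^ nat e) \<longlongrightarrow> a ^ nat e) F" using assms(1) by (intro tendsto_intros)
  thus ?thesis using e by (simp add: power_int_def)
qed

lemma tendsto_monoE:
  assumes "\<And>i j. i < n \<Longrightarrow> j < n \<Longrightarrow> ((\<lambda>x. Mf x $$ (i,j)) \<longlongrightarrow> M0 $$ (i,j)) F"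
    and "\<And>i j. i < n \<Longrightarrow> j < n \<Longrightarrow> M0 $$ (i,j) \<noteq> 0 \<or> 0 \<le> E i j"
  shows "((\<lambda>x. monoE n E (Mf x)) \<longlongrightarrow> monoE n E M0) F"
  unfolding monoE_def
  by (intro tendsto_prod tendsto_powi_gen assms) auto

lemma prod_powi_sum:
  assumes "(c::real) \<noteq> 0" "finite X"
  shows "(\<Prod>x\<in>X. c powi f x) = c powi (\<Sum>x\<in>X. f x)"
  using assms(2) by (induction X rule: finite_induct) (auto simp: power_int_add assms(1))

lemma monoE_const_pow: "(c::real) \<noteq> 0 \<Longrightarrow>
  (\<Prod>p<(n::nat). \<Prod>q<n. (c powi I p q) powi E p q) = c powi (\<Sum>p<n. \<Sum>q<n. I p q * E p q)"
proof -
  assume c: "c \<noteq> 0"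
  have "(\<Prod>p<n. \<Prod>q<n. (c powi I p q) powi E p q) = (\<Prod>p<n. c powi (\<Sum>q<n. I p q * E p q))"
    by (intro prod.cong refl) (simp only: power_int_mult[symmetric], rule prod_powi_sum[OF c], simp)
  also have "\<dots> = c powi (\<Sum>p<n. \<Sum>q<n. I p q * E p q)" by (rule prod_powi_sum[OF c], simp)
  finally show ?thesis .
qed

lemma sum_if_le: "i < (n::nat) \<Longrightarrow> (\<Sum>p<n. if p \<le> i then f p else 0) = (\<Sum>p\<le>i. (f p :: int))"
proof -
  assume i: "i < n"
  have "(\<Sum>p<n. if p \<le> i then f p else 0) = (\<Sum>p\<in>{p\<in>{..<n}. p \<le> i}. f p)"
    by (rule sum.inter_filter[symmetric]) simp
  also have "{p\<in>{..<n}. p \<le> i} = {..i}" using i by auto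
  finally show ?thesis .
qed

lemma if10: "(if b then 1 else 0) * (x::int) = (if b then x else 0)" by simp

lemma ASM_sums:
  assumes A: "is_ASM n A" and i: "i < n" and j: "j < n"
  shows "(\<Sum>p<n. \<Sum>q<n. (if p \<le> i \<and> q \<le> j then 1 else 0) * A $$ (p,q)) = corner_sum A i j"
    and "(\<Sum>p<n. \<Sum>q<n. (if p \<le> i then 1 else 0) * A $$ (p,q)) = int (Suc i)"
    and "(\<Sum>p<n. \<Sum>q<n. (if q \<le> j then 1 else 0) * A $$ (p,q)) = int (Suc j)"
    and "(\<Sum>p<n. \<Sum>q<n. 1 * A $$ (p,q)) = int n"
proof -
  have rs: "\<And>p. p < n \<Longrightarrow> (\<Sum>q<n. A $$ (p,q)) = 1" and cs: "\<And>q. q < n \<Longrightarrow> (\<Sum>p<n. A $$ (p,q)) = 1"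
    using A unfolding is_ASM_def by auto
  have "(\<Sum>p<n. \<Sum>q<n. (if p \<le> i \<and> q \<le> j then 1 else 0) * A $$ (p,q)) = (\<Sum>p<n. if p \<le> i then (\<Sum>q<n. if q \<le> j then A $$ (p,q) else 0) else 0)"
  proof (intro sum.cong refl)
    fix p
    have "(\<Sum>q<n. (if p \<le> i \<and> q \<le> j then 1 else 0) * A $$ (p,q)) = (\<Sum>q<n. if p \<le> i then (if q \<le> j then A $$ (p,q) else 0) else 0)"
      by (rule sum.cong) auto
    thus "(\<Sum>q<n. (if p \<le> i \<and> q \<le> j then 1 else 0) * A $$ (p,q)) = (if p \<le> i then (\<Sum>q<n. if q \<le> j then A $$ (p,q) else 0) else 0)"
      by auto
  qed
  also have "\<dots> = (\<Sum>p\<le>i. \<Sum>q\<le>j. A $$ (p,q))" using i j by (simp add: sum_if_le)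
  finally show "(\<Sum>p<n. \<Sum>q<n. (if p \<le> i \<and> q \<le> j then 1 else 0) * A $$ (p,q)) = corner_sum A i j"
    unfolding corner_sum_def .
  have "(\<Sum>p<n. \<Sum>q<n. (if p \<le> i then 1 else 0) * A $$ (p,q)) = (\<Sum>p<n. if p \<le> i then (\<Sum>q<n. A $$ (p,q)) else 0)"
    by (intro sum.cong refl) auto
  also have "\<dots> = (\<Sum>p\<le>i. (\<Sum>q<n. A $$ (p,q)))" using i by (simp add: sum_if_le)
  also have "\<dots> = (\<Sum>p\<le>i. 1)" using i rs by (intro sum.cong refl) auto
  finally show "(\<Sum>p<n. \<Sum>q<n. (if p \<le> i then 1 else 0) * A $$ (p,q)) = int (Suc i)" by simp
  have "(\<Sum>p<n. \<Sum>q<n. (if q \<le> j then 1 else 0) * A $$ (p,q)) = (\<Sum>q<n. \<Sum>p<n. (if q \<le> j then 1 else 0) * A $$ (p,q))"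
    by (rule sum.swap)
  also have "\<dots> = (\<Sum>q<n. if q \<le> j then (\<Sum>p<n. A $$ (p,q)) else 0)"
    by (intro sum.cong refl) auto
  also have "\<dots> = (\<Sum>q\<le>j. (\<Sum>p<n. A $$ (p,q)))" using j by (simp add: sum_if_le)
  also have "\<dots> = (\<Sum>q\<le>j. 1)" using j cs by (intro sum.cong refl) auto
  finally show "(\<Sum>p<n. \<Sum>q<n. (if q \<le> j then 1 else 0) * A $$ (p,q)) = int (Suc j)" by simp
  have "(\<Sum>p<n. \<Sum>q<n. 1 * A $$ (p,q)) = (\<Sum>p<n. 1)" using rs by (intro sum.cong refl) auto
  thus "(\<Sum>p<n. \<Sum>q<n. 1 * A $$ (p,q)) = int n" by simp
qed

definition alphaf :: "nat \<Rightarrow> nat \<Rightarrow> real" where "alphaf i p = (if p \<le> i then 1 else 2)"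

definition M0 :: "nat \<Rightarrow> nat \<Rightarrow> nat \<Rightarrow> real mat" where
  "M0 n i j = mat n n (\<lambda>(p,q). 1 / (alphaf i p + alphaf j q))"

lemma M0_mono:
  assumes A: "is_ASM n A" and i: "i < n" and j: "j < n"
  shows "mono_eval n A (M0 n i j) = (9/8) powi corner_sum A i j * ((4/3) powi int (Suc i) * (4/3) powi int (Suc j) * (1/4) powi int n)"
proof -
  let ?I1 = "\<lambda>p q. if p \<le> i \<and> q \<le> j then 1 else (0::int)"
  let ?I2 = "\<lambda>p q. if p \<le> i then 1 else (0::int)"
  let ?I3 = "\<lambda>p q. if q \<le> j then 1 else (0::int)"
  have ent: "1 / (alphaf i p + alphaf j q) = (9/8) powi ?I1 p q * (4/3) powi ?I2 p q * (4/3) powi ?I3 p q * (1/4) powi 1" for p q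
    by (auto simp: alphaf_def)
  have "mono_eval n A (M0 n i j) = (\<Prod>p<n. \<Prod>q<n. ((9/8) powi ?I1 p q * (4/3) powi ?I2 p q * (4/3) powi ?I3 p q * (1/4) powi 1) powi A $$ (p,q))"
    unfolding mono_eval_def M0_def by (intro prod.cong refl) (simp add: ent del: power_int_1_right)
  also have "\<dots> = (\<Prod>p<n. \<Prod>q<n. ((9/8) powi ?I1 p q) powi A $$ (p,q)) * (\<Prod>p<n. \<Prod>q<n. ((4/3) powi ?I2 p q) powi A $$ (p,q))
     * (\<Prod>p<n. \<Prod>q<n. ((4/3) powi ?I3 p q) powi A $$ (p,q)) * (\<Prod>p<n. \<Prod>q<n. ((1/4) powi 1) powi A $$ (p,q))"
    by (simp only: power_int_mult_distrib prod.distrib)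
  also have "\<dots> = (9/8) powi corner_sum A i j * ((4/3) powi int (Suc i) * (4/3) powi int (Suc j) * (1/4) powi int n)"
    by (simp only: monoE_const_pow ASM_sums[OF A i j])
  finally show ?thesis .
qed



lemma bad_matrix:
  assumes A: "is_ASM n A" and B: "is_ASM n B" and i: "i < n" and j: "j < n"
    and lt: "corner_sum A i j < corner_sum B i j"
  shows "\<exists>M. M \<in> carrier_mat n n \<and> (\<forall>I J. valid_minor n I J \<longrightarrow> minor M I J > 0)
            \<and> (\<forall>p<n. \<forall>q<n. M $$ (p,q) > 0) \<and> diff_eval n A B M < 0"
proof -
  define Mf where "Mf e = cauchy_mat n (\<lambda>p. alphaf i p + e * real p) (\<lambda>q. alphaf j q + e * real q)" for e :: real
  have apos: "alphaf k p \<ge> 1" for k p by (simp add: alphaf_def)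
  have amono: "p \<le> q \<Longrightarrow> alphaf k p \<le> alphaf k q" for k p q by (simp add: alphaf_def)
  have lim0: "((\<lambda>e. monoE n E (Mf e)) \<longlongrightarrow> monoE n E (M0 n i j)) (at_right 0)" for E
  proof (rule tendsto_monoE)
    fix p q assume p: "p < n" and q: "q < n"
    have "((\<lambda>e. 1 / (alphaf i p + e * real p + (alphaf j q + e * real q))) \<longlongrightarrow> 1 / (alphaf i p + 0 * real p + (alphaf j q + 0 * real q))) (at_right 0)"
      using apos[of i p] apos[of j q] by (intro tendsto_intros) auto
    thus "((\<lambda>e. Mf e $$ (p,q)) \<longlongrightarrow> M0 n i j $$ (p,q)) (at_right 0)"
      using p q by (simp add: Mf_def cauchy_mat_def M0_def)
    show "M0 n i j $$ (p,q) \<noteq> 0 \<or> 0 \<le> E p q"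
      using p q apos[of i p] apos[of j q] by (simp add: M0_def)
  qed
  have limd: "((\<lambda>e. diff_eval n A B (Mf e)) \<longlongrightarrow> diff_eval n A B (M0 n i j)) (at_right 0)"
    unfolding diff_eval_def mono_eval_E by (intro tendsto_diff lim0)
  have neg: "diff_eval n A B (M0 n i j) < 0"
  proof -
    have R: "(4/3) powi int (Suc i) * (4/3) powi int (Suc j) * (1/4) powi int n > (0::real)" by simp
    have "(9/8::real) powi corner_sum A i j < (9/8) powi corner_sum B i j"
      by (rule power_int_strict_increasing[OF lt]) simp
    thus ?thesis unfolding diff_eval_def M0_mono[OF A i j] M0_mono[OF B i j] using R by simp
  qed
  have ev: "eventually (\<lambda>e. diff_eval n A B (Mf e) < 0 \<and> e > 0) (at_right 0)"
    using order_tendstoD(2)[OF limd neg] eventually_at_right_less by (rule eventually_conj)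
  have "\<exists>e. diff_eval n A B (Mf e) < 0 \<and> e > 0" using ev by (drule_tac eventually_happens) simp
  then obtain e where e: "diff_eval n A B (Mf e) < 0" "e > 0" by blast
  have ppos: "0 < alphaf k p + e * real p" for k p
  proof -
    have "0 \<le> e * real p" using e(2) by simp
    thus ?thesis using apos[of k p] by linarith
  qed
  have pmono: "alphaf k p + e * real p < alphaf k q + e * real q" if "p < q" for k p q
  proof -
    have "e * real p < e * real q" using that e(2) by simp
    thus ?thesis using amono[of p q k] that by linarith
  qed
  show ?thesis
  proof (intro exI conjI allI impI)
    show "Mf e \<in> carrier_mat n n" by (simp add: Mf_def cauchy_mat_def)
    show "diff_eval n A B (Mf e) < 0" by (rule e)
    fix I J assume "valid_minor n I J"
    thus "minor (Mf e) I J > 0" unfolding Mf_def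
    proof (rule cauchy_minor_pos[rotated 4])
      fix p q :: nat assume "p < q" "q < n"
      thus "alphaf i p + e * real p < alphaf i q + e * real q" using pmono by blast
    next
      fix p q :: nat assume "p < q" "q < n"
      thus "alphaf j p + e * real p < alphaf j q + e * real q" using pmono by blast
    qed (use ppos in auto)
  next
    fix p q assume "p < n" "q < n"
    thus "Mf e $$ (p,q) > 0" using apos[of i p] apos[of j q] e(2) using ppos[of i p] ppos[of j q] by (simp add: Mf_def cauchy_mat_def)
  qed
qed



lemma det_row_lin:
  fixes u v :: "nat \<Rightarrow> 'a::comm_ring_1"
  assumes a0: "a0 < m"
  shows "det (mat m m (\<lambda>(a,b). if a = a0 then u b + t * v b else f a b)) =
         det (mat m m (\<lambda>(a,b). if a = a0 then u b else f a b)) + t * det (mat m m (\<lambda>(a,b). if a = a0 then v b else f a b))"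
proof -
  let ?P = "{p. p permutes {0..<m}}"
  let ?R = "\<lambda>p. \<Prod>a\<in>{0..<m} - {a0}. f a (p a)"
  have fin: "finite {0..<m}" and a0': "a0 \<in> {0..<m}" using a0 by auto
  have key: "(\<Prod>a=0..<m. mat m m (\<lambda>(a,b). if a = a0 then w b else f a b) $$ (a, p a)) = w (p a0) * ?R p"
    if p: "p permutes {0..<m}" for w p
  proof -
    have pa: "\<And>a. a < m \<Longrightarrow> p a < m" using p by (simp add: permutes_in_image)
    have "(\<Prod>a=0..<m. mat m m (\<lambda>(a,b). if a = a0 then w b else f a b) $$ (a, p a)) = (\<Prod>a=0..<m. if a = a0 then w (p a) else f a (p a))"
      by (intro prod.cong refl) (simp add: pa)
    also have "\<dots> = w (p a0) * (\<Prod>a\<in>{0..<m} - {a0}. if a = a0 then w (p a) else f a (p a))"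
      by (subst prod.remove[OF fin a0']) simp
    also have "(\<Prod>a\<in>{0..<m} - {a0}. if a = a0 then w (p a) else f a (p a)) = ?R p"
      by (intro prod.cong refl) auto
    finally show ?thesis .
  qed
  have d: "det (mat m m (\<lambda>(a,b). if a = a0 then w b else f a b)) = (\<Sum>p\<in>?P. signof p * (w (p a0) * ?R p))" for w
  proof -
    have "det (mat m m (\<lambda>(a,b). if a = a0 then w b else f a b)) =
      (\<Sum>p\<in>?P. signof p * (\<Prod>a=0..<m. mat m m (\<lambda>(a,b). if a = a0 then w b else f a b) $$ (a, p a)))"
      by (rule det_def') simp
    also have "\<dots> = (\<Sum>p\<in>?P. signof p * (w (p a0) * ?R p))"
    proof (rule sum.cong[OF refl])
      fix p assume "p \<in> ?P"
      hence p: "p permutes {0..<m}" by simp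
      show "signof p * (\<Prod>a=0..<m. mat m m (\<lambda>(a,b). if a = a0 then w b else f a b) $$ (a, p a)) = signof p * (w (p a0) * ?R p)"
        by (subst key[OF p]) (rule refl)
    qed
    finally show ?thesis .
  qed
  have "det (mat m m (\<lambda>(a,b). if a = a0 then u b + t * v b else f a b)) = (\<Sum>p\<in>?P. signof p * ((u (p a0) + t * v (p a0)) * ?R p))"
    by (rule d)
  also have "\<dots> = (\<Sum>p\<in>?P. signof p * (u (p a0) * ?R p)) + t * (\<Sum>p\<in>?P. signof p * (v (p a0) * ?R p))"
    by (simp add: sum.distrib sum_distrib_left algebra_simps)
  also have "\<dots> = det (mat m m (\<lambda>(a,b). if a = a0 then u b else f a b)) + t * det (mat m m (\<lambda>(a,b). if a = a0 then v b else f a b))"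
    by (simp only: d)
  finally show ?thesis .
qed

lemma card_swap: "finite I \<Longrightarrow> k \<in> I \<Longrightarrow> l \<notin> I \<Longrightarrow> card (insert l (I - {k})) = card I"
proof -
  assume f: "finite I" and k: "k \<in> I" and l: "l \<notin> I"
  have "card (insert l (I - {k})) = Suc (card (I - {k}))" using f l by simp
  also have "\<dots> = card I" by (rule card_Suc_Diff1[OF f k])
  finally show ?thesis .
qed

lemma pick_swap:
  assumes fin: "finite I" and k: "k \<in> I" and l: "l \<notin> I" and adj: "l = Suc k \<or> k = Suc l" and a: "a < card I"
  shows "pick (insert l (I - {k})) a = (if pick I a = k then l else pick I a)"
proof -
  let ?I' = "insert l (I - {k})"
  let ?x = "pick I a"
  have xI: "?x \<in> I" using pick_in_set_le[OF a] .
  have cx: "card {y\<in>I. y < ?x} = a" using card_pick_le[OF a] .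
  show ?thesis
  proof (cases "?x = k")
    case True
    have "{y\<in>?I'. y < l} = {y\<in>I. y < k}" using adj l True xI by (auto simp: less_Suc_eq)
    hence "card {y\<in>?I'. y < l} = a" using cx True by simp
    moreover have "pick ?I' (card {y\<in>?I'. y < l}) = l" by (rule pick_card_in_set) simp
    ultimately show ?thesis using True by simp
  next
    case False
    have xne: "?x \<noteq> l" using xI l by auto
    have xI': "?x \<in> ?I'" using xI False by auto
    have "card {y\<in>?I'. y < ?x} = card {y\<in>I. y < ?x}"
    proof (cases "?x < k")
      case True
      hence "?x < l" using adj xne by auto
      hence "{y\<in>?I'. y < ?x} = {y\<in>I. y < ?x}" using True by auto
      thus ?thesis by simp
    next
      case False2: False
      hence "k < ?x" using False by auto
      hence "l < ?x" using adj xne by auto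
      hence eq: "{y\<in>?I'. y < ?x} = insert l ({y\<in>I. y < ?x} - {k})" using \<open>k < ?x\<close> by auto
      have "finite {y\<in>I. y < ?x}" using fin by auto
      thus ?thesis unfolding eq by (rule card_swap) (use \<open>k < ?x\<close> k l in auto)
    qed
    hence "card {y\<in>?I'. y < ?x} = a" using cx by simp
    moreover have "pick ?I' (card {y\<in>?I'. y < ?x}) = ?x" by (rule pick_card_in_set[OF xI'])
    ultimately show ?thesis using False by simp
  qed
qed

definition rop :: "nat \<Rightarrow> nat \<Rightarrow> nat \<Rightarrow> real \<Rightarrow> real mat \<Rightarrow> real mat" where
  "rop n k l t M = mat n n (\<lambda>(i,j). if i = k then M$$(k,j) + t * M$$(l,j) else M$$(i,j))"

lemma pick_lt: "I \<subseteq> {0..<n} \<Longrightarrow> a < card I \<Longrightarrow> pick I a < n"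
  using pick_in_set_le by fastforce

lemma rop_TNN:
  assumes T: "TNN_mat n M" and t: "0 \<le> t" and k: "k < n" and l: "l < n" and adj: "l = Suc k \<or> k = Suc l"
  shows "TNN_mat n (rop n k l t M)"
  unfolding TNN_mat_def
proof (intro conjI allI impI)
  show "rop n k l t M \<in> carrier_mat n n" by (simp add: rop_def)
  have M: "M \<in> carrier_mat n n" using T by (simp add: TNN_mat_def)
  fix I J assume v: "valid_minor n I J"
  hence I: "I \<subseteq> {0..<n}" and J: "J \<subseteq> {0..<n}" and c: "card I = card J" and Ine: "I \<noteq> {}"
    unfolding valid_minor_def by auto
  have finI: "finite I" using I finite_subset by auto
  let ?m = "card I"
  define g where "g a b = M $$ (pick I a, pick J b)" for a b
  have sub: "submatrix (rop n k l t M) I J = mat ?m ?m (\<lambda>(a,b). (if pick I a = k then M$$(k, pick J b) + t * M$$(l, pick J b) else g a b))"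
    unfolding rop_def submatrix_mat[OF I J] c g_def by (auto intro!: eq_matI)
  have subM: "submatrix M I J = mat ?m ?m (\<lambda>(a,b). g a b)"
    unfolding g_def c by (subst mat_of_carrier[OF M], subst submatrix_mat[OF I J]) (simp add: c case_prod_beta)
  have mM: "minor M I J \<ge> 0" using T v unfolding TNN_mat_def by auto
  show "0 \<le> minor (rop n k l t M) I J"
  proof (cases "k \<in> I")
    case False
    have "\<And>a. a < ?m \<Longrightarrow> pick I a \<noteq> k" using False pick_in_set_le by metis
    hence "submatrix (rop n k l t M) I J = submatrix M I J" unfolding sub subM by (auto intro!: eq_matI)
    thus ?thesis using mM unfolding minor_def by simp
  next
    case True
    define a0 where "a0 = card {y\<in>I. y < k}"
    have pa0: "pick I a0 = k" unfolding a0_def by (rule pick_card_in_set[OF True])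
    have a0m: "a0 < ?m" unfolding a0_def using True finI
      by (intro psubset_card_mono) auto
    have pinj: "\<And>a. a < ?m \<Longrightarrow> pick I a = k \<longleftrightarrow> a = a0"
      using pa0 a0m by (metis linorder_neqE_nat order.strict_implies_not_eq pick_mono_le)
    have sub2: "submatrix (rop n k l t M) I J = mat ?m ?m (\<lambda>(a,b). if a = a0 then M$$(k, pick J b) + t * M$$(l, pick J b) else g a b)"
      unfolding sub by (auto intro!: eq_matI simp: pinj)
    show ?thesis
    proof (cases "l \<in> I")
      case True2: True
      define a1 where "a1 = card {y\<in>I. y < l}"
      have pa1: "pick I a1 = l" unfolding a1_def by (rule pick_card_in_set[OF True2])
      have a1m: "a1 < ?m" unfolding a1_def using True2 finI
        by (intro psubset_card_mono) auto
      have a01: "a1 \<noteq> a0" using pa0 pa1 adj by auto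
      have "submatrix (rop n k l t M) I J = addrow t a0 a1 (submatrix M I J)"
        unfolding sub2 subM mat_addrow_def using a1m
        by (auto intro!: eq_matI simp: g_def pa0 pa1)
      hence "minor (rop n k l t M) I J = minor M I J"
        unfolding minor_def using det_addrow[OF a1m a01[symmetric], of "submatrix M I J" t] subM by simp
      thus ?thesis using mM by simp
    next
      case False2: False
      define I' where "I' = insert l (I - {k})"
      have cI': "card I' = ?m" unfolding I'_def by (rule card_swap[OF finI True False2])
      have vI': "valid_minor n I' J" using v l cI' unfolding valid_minor_def I'_def by auto
      have I'sub: "I' \<subseteq> {0..<n}" using vI' unfolding valid_minor_def by auto
      have pI': "\<And>a. a < ?m \<Longrightarrow> pick I' a = (if a = a0 then l else pick I a)"
        unfolding I'_def using pick_swap[OF finI True False2 adj] pinj by auto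
      have subM': "submatrix M I' J = mat ?m ?m (\<lambda>(a,b). if a = a0 then M$$(l, pick J b) else g a b)"
        by (subst mat_of_carrier[OF M], subst submatrix_mat[OF I'sub J]) (auto intro!: eq_matI simp: cI' c[symmetric] pI' g_def)
      have mM': "minor M I' J \<ge> 0" using T vI' unfolding TNN_mat_def by auto
      have subMa: "submatrix M I J = mat ?m ?m (\<lambda>(a,b). if a = a0 then M$$(k, pick J b) else g a b)"
        unfolding subM by (auto intro!: eq_matI simp: g_def pa0)
      have "minor (rop n k l t M) I J = minor M I J + t * minor M I' J"
        unfolding minor_def sub2 subM' subMa by (rule det_row_lin[OF a0m])
      thus ?thesis using mM mM' t by simp
    qed
  qed
qed



lemma TNN_transpose:
  assumes T: "TNN_mat n M" shows "TNN_mat n (M\<^sup>T)"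
  unfolding TNN_mat_def
proof (intro conjI allI impI)
  have M: "M \<in> carrier_mat n n" using T by (simp add: TNN_mat_def)
  show "M\<^sup>T \<in> carrier_mat n n" using M by simp
  fix I J assume v: "valid_minor n I J"
  hence I: "I \<subseteq> {0..<n}" and J: "J \<subseteq> {0..<n}" and c: "card I = card J" and Ine: "I \<noteq> {}"
    unfolding valid_minor_def by auto
  have finI: "finite I" using I finite_subset by auto
  have Jne: "J \<noteq> {}" using c Ine finI by auto
  have v': "valid_minor n J I" using I J c Jne unfolding valid_minor_def by auto
  have MT: "M\<^sup>T = mat n n (\<lambda>(i,j). M $$ (j,i))" using M by (auto intro!: eq_matI)
  have "submatrix (M\<^sup>T) I J = (submatrix M J I)\<^sup>T"
    unfolding MT by (subst mat_of_carrier[OF M], subst submatrix_mat[OF J I], subst submatrix_mat[OF I J]) (auto intro!: eq_matI)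
  hence "minor (M\<^sup>T) I J = minor M J I"
    unfolding minor_def by (subst (asm) mat_of_carrier[OF M], simp add: submatrix_mat[OF J I] c det_transpose[of _ "card J"])
  thus "0 \<le> minor (M\<^sup>T) I J" using T v' unfolding TNN_mat_def by auto
qed

lemma TNN_nonneg: "TNN_mat n M \<Longrightarrow> i < n \<Longrightarrow> j < n \<Longrightarrow> M $$ (i,j) \<ge> 0"
  unfolding TNN_mat_def using valid_1x1 minor_1x1 by metis

fun downp :: "nat \<Rightarrow> nat \<Rightarrow> real \<Rightarrow> real mat \<Rightarrow> real mat" where
  "downp n 0 t M = M"
| "downp n (Suc m) t M = rop n (Suc m) m t (downp n m t M)"

fun upp :: "nat \<Rightarrow> nat \<Rightarrow> real \<Rightarrow> real mat \<Rightarrow> real mat" where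
  "upp n 0 t M = M"
| "upp n (Suc m) t M = rop n (n - 2 - m) (n - 1 - m) t (upp n m t M)"

definition rowmix :: "nat \<Rightarrow> real \<Rightarrow> real mat \<Rightarrow> real mat" where
  "rowmix n t M = upp n (n - 1) t (downp n (n - 1) t M)"

definition fullmix :: "nat \<Rightarrow> real \<Rightarrow> real mat \<Rightarrow> real mat" where
  "fullmix n t M = (rowmix n t ((rowmix n t M)\<^sup>T))\<^sup>T"

lemma rop_idx: "i < n \<Longrightarrow> j < n \<Longrightarrow> rop n k l t M $$ (i,j) = (if i = k then M$$(k,j) + t * M$$(l,j) else M$$(i,j))"
  by (simp add: rop_def)

lemma downp_TNN: "TNN_mat n M \<Longrightarrow> 0 \<le> t \<Longrightarrow> m \<le> n - 1 \<Longrightarrow> TNN_mat n (downp n m t M)"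
  by (induction m) (auto intro!: rop_TNN)

lemma upp_TNN: "TNN_mat n M \<Longrightarrow> 0 \<le> t \<Longrightarrow> m \<le> n - 1 \<Longrightarrow> TNN_mat n (upp n m t M)"
  by (induction m) (auto intro!: rop_TNN)

lemma rowmix_TNN: "TNN_mat n M \<Longrightarrow> 0 \<le> t \<Longrightarrow> TNN_mat n (rowmix n t M)"
  unfolding rowmix_def by (intro upp_TNN downp_TNN) auto

lemma fullmix_TNN: "TNN_mat n M \<Longrightarrow> 0 \<le> t \<Longrightarrow> TNN_mat n (fullmix n t M)"
  unfolding fullmix_def by (intro TNN_transpose rowmix_TNN) auto

lemma downp_pos:
  assumes T: "TNN_mat n M" and t: "0 < t" and a: "a < n" and b: "b < n" and pos: "M $$ (a,b) > 0"
  shows "m \<le> n - 1 \<Longrightarrow> (\<forall>p. a \<le> p \<and> p \<le> m \<longrightarrow> downp n m t M $$ (p,b) > 0) \<and> (\<forall>p<n. m < p \<longrightarrow> (\<forall>j<n. downp n m t M $$ (p,j) = M $$ (p,j)))"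
proof (induction m)
  case 0
  then show ?case using pos by auto
next
  case (Suc m)
  let ?D = "downp n m t M"
  have IH: "\<forall>p. a \<le> p \<and> p \<le> m \<longrightarrow> ?D $$ (p,b) > 0" "\<forall>p<n. m < p \<longrightarrow> (\<forall>j<n. ?D $$ (p,j) = M $$ (p,j))"
    using Suc by auto
  have sm: "Suc m < n" using Suc.prems by auto
  have TD: "TNN_mat n ?D" using downp_TNN[OF T _, of t m] t Suc.prems by auto
  have nn: "\<And>i j. i < n \<Longrightarrow> j < n \<Longrightarrow> ?D $$ (i,j) \<ge> 0" using TNN_nonneg[OF TD] .
  show ?case
  proof (intro conjI allI impI)
    fix p assume p: "a \<le> p \<and> p \<le> Suc m"
    have pn: "p < n" using p sm by auto
    show "downp n (Suc m) t M $$ (p,b) > 0"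
    proof (cases "p = Suc m")
      case True
      have "downp n (Suc m) t M $$ (p,b) = ?D $$ (Suc m, b) + t * ?D $$ (m, b)"
        using True sm b by (simp add: rop_idx)
      moreover have "?D $$ (Suc m, b) \<ge> 0" "?D $$ (m, b) \<ge> 0" using nn sm b by auto
      moreover have "?D $$ (Suc m, b) > 0 \<or> ?D $$ (m, b) > 0"
      proof (cases "a = Suc m")
        case True
        thus ?thesis using IH(2) sm b pos by auto
      next
        case False
        thus ?thesis using IH(1) p True by auto
      qed
      ultimately show ?thesis using t by (auto intro: add_pos_nonneg add_nonneg_pos)
    next
      case False
      thus ?thesis using IH(1) p pn b by (simp add: rop_idx)
    qed
  next
    fix p j assume "p < n" "Suc m < p" "j < n"
    thus "downp n (Suc m) t M $$ (p,j) = M $$ (p,j)" using IH(2) by (simp add: rop_idx)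
  qed
qed

lemma upp_pos:
  assumes T: "TNN_mat n M" and t: "0 < t" and b: "b < n" and pos: "M $$ (n - 1,b) > 0"
  shows "m \<le> n - 1 \<Longrightarrow> \<forall>p. n - 1 - m \<le> p \<and> p \<le> n - 1 \<longrightarrow> upp n m t M $$ (p,b) > 0"
proof (induction m)
  case 0
  then show ?case using pos by auto
next
  case (Suc m)
  let ?U = "upp n m t M"
  have IH: "\<forall>p. n - 1 - m \<le> p \<and> p \<le> n - 1 \<longrightarrow> ?U $$ (p,b) > 0" using Suc by auto
  have sm: "Suc m \<le> n - 1" using Suc.prems by auto
  have TU: "TNN_mat n ?U" using upp_TNN[OF T _, of t m] t Suc.prems by auto
  have nn: "\<And>i j. i < n \<Longrightarrow> j < n \<Longrightarrow> ?U $$ (i,j) \<ge> 0" using TNN_nonneg[OF TU] .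
  show ?case
  proof (intro allI impI)
    fix p assume p: "n - 1 - Suc m \<le> p \<and> p \<le> n - 1"
    have pn: "p < n" using p sm by auto
    show "upp n (Suc m) t M $$ (p,b) > 0"
    proof (cases "p = n - 2 - m")
      case True
      have "upp n (Suc m) t M $$ (p,b) = ?U $$ (n - 2 - m, b) + t * ?U $$ (n - 1 - m, b)"
        using True pn b by (simp add: rop_idx)
      moreover have "?U $$ (n - 2 - m, b) \<ge> 0" using nn b sm by auto
      moreover have "?U $$ (n - 1 - m, b) > 0" using IH by auto
      ultimately show ?thesis using t by (auto intro: add_nonneg_pos)
    next
      case False
      hence "n - 1 - m \<le> p" using p sm by auto
      thus ?thesis using IH p pn b False by (simp add: rop_idx)
    qed
  qed
qed

lemma rowmix_pos:
  assumes T: "TNN_mat n M" and t: "0 < t" and a: "a < n" and b: "b < n" and pos: "M $$ (a,b) > 0"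
  shows "\<forall>p<n. rowmix n t M $$ (p,b) > 0"
proof -
  have D: "downp n (n - 1) t M $$ (n - 1, b) > 0" using downp_pos[OF T t a b pos, of "n - 1"] a by auto
  have TD: "TNN_mat n (downp n (n - 1) t M)" using downp_TNN[OF T] t by auto
  show ?thesis using upp_pos[OF TD t b D, of "n - 1"] unfolding rowmix_def by auto
qed

lemma fullmix_pos:
  assumes T: "TNN_mat n M" and t: "0 < t" and a: "a < n" and b: "b < n" and pos: "M $$ (a,b) > 0"
  shows "\<forall>p<n. \<forall>q<n. fullmix n t M $$ (p,q) > 0"
proof (intro allI impI)
  fix p q assume p: "p < n" and q: "q < n"
  let ?R = "rowmix n t M"
  have TR: "TNN_mat n ?R" using rowmix_TNN[OF T] t by auto
  have R: "?R \<in> carrier_mat n n" using TR by (simp add: TNN_mat_def)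
  have TRT: "TNN_mat n (?R\<^sup>T)" by (rule TNN_transpose[OF TR])
  have "?R\<^sup>T $$ (b, p) > 0" using rowmix_pos[OF T t a b pos] p b R by auto
  hence "\<forall>r<n. rowmix n t (?R\<^sup>T) $$ (r, p) > 0" using rowmix_pos[OF TRT t b p] by auto
  moreover have "rowmix n t (?R\<^sup>T) \<in> carrier_mat n n" using rowmix_TNN[OF TRT] t by (simp add: TNN_mat_def)
  ultimately show "fullmix n t M $$ (p,q) > 0" unfolding fullmix_def using p q by auto
qed



definition convm :: "nat \<Rightarrow> (real \<Rightarrow> real mat) \<Rightarrow> real mat \<Rightarrow> real filter \<Rightarrow> bool" where
  "convm n Mf L F \<longleftrightarrow> (\<forall>i<n. \<forall>j<n. ((\<lambda>t. Mf t $$ (i,j)) \<longlongrightarrow> L $$ (i,j)) F)"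

lemma conv_rop:
  assumes F: "((\<lambda>t. t) \<longlongrightarrow> 0) F" and c: "convm n Mf L F" and k: "k < n" and l: "l < n"
  shows "convm n (\<lambda>t. rop n k l t (Mf t)) L F"
  unfolding convm_def
proof (intro allI impI)
  fix i j assume i: "i < n" and j: "j < n"
  show "((\<lambda>t. rop n k l t (Mf t) $$ (i,j)) \<longlongrightarrow> L $$ (i,j)) F"
  proof (cases "i = k")
    case True
    have "((\<lambda>t. Mf t $$ (k,j) + t * Mf t $$ (l,j)) \<longlongrightarrow> L $$ (k,j) + 0 * L $$ (l,j)) F"
      using c k l j F unfolding convm_def by (intro tendsto_intros) auto
    thus ?thesis using True i j by (simp add: rop_idx)
  next
    case False
    thus ?thesis using c i j unfolding convm_def by (simp add: rop_idx)
  qed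
qed

lemma conv_downp: "((\<lambda>t. t) \<longlongrightarrow> 0) F \<Longrightarrow> convm n Mf L F \<Longrightarrow> m \<le> n - 1 \<Longrightarrow> convm n (\<lambda>t. downp n m t (Mf t)) L F"
  by (induction m) (auto intro!: conv_rop)

lemma conv_upp: "((\<lambda>t. t) \<longlongrightarrow> 0) F \<Longrightarrow> convm n Mf L F \<Longrightarrow> 0 < n \<Longrightarrow> m \<le> n - 1 \<Longrightarrow> convm n (\<lambda>t. upp n m t (Mf t)) L F"
  by (induction m) (auto intro!: conv_rop)

lemma conv_rowmix: "((\<lambda>t. t) \<longlongrightarrow> 0) F \<Longrightarrow> convm n Mf L F \<Longrightarrow> 0 < n \<Longrightarrow> convm n (\<lambda>t. rowmix n t (Mf t)) L F"
proof -
  assume F: "((\<lambda>t. t) \<longlongrightarrow> 0) F" and c: "convm n Mf L F" and n: "0 < n"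
  have d: "convm n (\<lambda>t. downp n (n - 1) t (Mf t)) L F" by (rule conv_downp[OF F c]) simp
  from conv_upp[OF F d n, of "n - 1"] show ?thesis unfolding rowmix_def by simp
qed

lemma conv_transpose:
  assumes car: "\<And>t. Mf t \<in> carrier_mat n n" and L: "L \<in> carrier_mat n n" and c: "convm n Mf L F"
  shows "convm n (\<lambda>t. (Mf t)\<^sup>T) (L\<^sup>T) F"
  unfolding convm_def
proof (intro allI impI)
  fix i j assume i: "i < n" and j: "j < n"
  have eq: "(\<lambda>t. (Mf t)\<^sup>T $$ (i,j)) = (\<lambda>t. Mf t $$ (j,i))"
  proof
    fix t have "Mf t \<in> carrier_mat n n" by (rule car)
    thus "(Mf t)\<^sup>T $$ (i,j) = Mf t $$ (j,i)" using i j by auto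
  qed
  show "((\<lambda>t. (Mf t)\<^sup>T $$ (i,j)) \<longlongrightarrow> L\<^sup>T $$ (i,j)) F"
    unfolding eq using c i j L unfolding convm_def by auto
qed

lemma downp_carrier: "M \<in> carrier_mat n n \<Longrightarrow> downp n m t M \<in> carrier_mat n n"
  by (induction m) (auto simp: rop_def)
lemma upp_carrier: "M \<in> carrier_mat n n \<Longrightarrow> upp n m t M \<in> carrier_mat n n"
  by (induction m) (auto simp: rop_def)
lemma rowmix_carrier: "M \<in> carrier_mat n n \<Longrightarrow> rowmix n t M \<in> carrier_mat n n"
  unfolding rowmix_def by (intro upp_carrier downp_carrier)

lemma conv_fullmix:
  assumes M: "M \<in> carrier_mat n n" and n: "0 < n"
  shows "convm n (\<lambda>t. fullmix n t M) M (at_right 0)"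
proof -
  have F: "((\<lambda>t. t) \<longlongrightarrow> (0::real)) (at_right 0)" by (rule tendsto_ident_at)
  have c0: "convm n (\<lambda>t. M) M (at_right 0)" unfolding convm_def by auto
  have c1: "convm n (\<lambda>t. rowmix n t M) M (at_right 0)" using conv_rowmix[OF F c0 n] by simp
  have c2: "convm n (\<lambda>t. (rowmix n t M)\<^sup>T) (M\<^sup>T) (at_right 0)"
    by (rule conv_transpose[OF rowmix_carrier[OF M] M c1])
  have c3: "convm n (\<lambda>t. rowmix n t ((rowmix n t M)\<^sup>T)) (M\<^sup>T) (at_right 0)"
    using conv_rowmix[OF F c2 n] by simp
  have c4: "convm n (\<lambda>t. (rowmix n t ((rowmix n t M)\<^sup>T))\<^sup>T) (M\<^sup>T\<^sup>T) (at_right 0)"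
  proof (rule conv_transpose[OF _ _ c3])
    fix t show "rowmix n t ((rowmix n t M)\<^sup>T) \<in> carrier_mat n n"
      by (rule rowmix_carrier) (use rowmix_carrier[OF M] in simp)
  qed (use M in simp)
  thus ?thesis unfolding fullmix_def by simp
qed

lemma zero_mono:
  assumes A: "is_ASM n A" and nn: "\<And>i j. i < n \<Longrightarrow> j < n \<Longrightarrow> A $$ (i,j) \<ge> 0" and n: "0 < n"
    and Z: "\<And>i j. i < n \<Longrightarrow> j < n \<Longrightarrow> M $$ (i,j) = 0"
  shows "mono_eval n A M = 0"
proof -
  have "(\<Sum>q<n. A $$ (0,q)) = 1" using A n unfolding is_ASM_def by auto
  then obtain q where q: "q < n" "A $$ (0,q) \<noteq> 0" by (metis (mono_tags, lifting) sum.neutral lessThan_iff zero_neq_one)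
  hence "A $$ (0,q) > 0" using nn[of 0 q] n by auto
  hence "M $$ (0,q) powi A $$ (0,q) = 0" using Z[OF n q(1)] by (simp add: power_int_def)
  hence "(\<Prod>j<n. M $$ (0,j) powi A $$ (0,j)) = 0" using q(1) by (intro prod_zero) auto
  thus ?thesis unfolding mono_eval_def using n by (intro prod_zero) auto
qed

lemma le_imp_TNN:
  assumes A: "is_ASM n A" and B: "is_ASM n B" and le: "ASM_le n A B"
  shows "diff_TNN n A B"
  unfolding diff_TNN_def
proof (intro allI impI)
  fix M assume H: "TNN_mat n M \<and> diff_defined n A B M"
  hence T: "TNN_mat n M" and D: "diff_defined n A B M" by auto
  have M: "M \<in> carrier_mat n n" using T by (simp add: TNN_mat_def)
  have nn: "\<And>i j. i < n \<Longrightarrow> j < n \<Longrightarrow> M $$ (i,j) \<ge> 0" using TNN_nonneg[OF T] .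
  show "0 \<le> diff_eval n A B M"
  proof (cases "\<exists>a<n. \<exists>b<n. M $$ (a,b) > 0")
    case True
    then obtain a b where a: "a < n" and b: "b < n" and pos: "M $$ (a,b) > 0" by auto
    have n: "0 < n" using a by auto
    have ev: "eventually (\<lambda>t. 0 \<le> diff_eval n A B (fullmix n t M)) (at_right 0)"
    proof -
      have "eventually (\<lambda>t::real. 0 < t) (at_right 0)" by (rule eventually_at_right_less)
      thus ?thesis
      proof (rule eventually_mono)
        fix t :: real assume t: "0 < t"
        have "mono_eval n B (fullmix n t M) \<le> mono_eval n A (fullmix n t M)"
          by (rule pos_case[OF A B le fullmix_TNN[OF T]]) (use t fullmix_pos[OF T t a b pos] in auto)
        thus "0 \<le> diff_eval n A B (fullmix n t M)" unfolding diff_eval_def by simp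
      qed
    qed
    have lim: "((\<lambda>t. diff_eval n A B (fullmix n t M)) \<longlongrightarrow> diff_eval n A B M) (at_right 0)"
    proof -
      have cf: "convm n (\<lambda>t. fullmix n t M) M (at_right 0)" by (rule conv_fullmix[OF M n])
      have "((\<lambda>t. monoE n (\<lambda>i j. C $$ (i,j)) (fullmix n t M)) \<longlongrightarrow> monoE n (\<lambda>i j. C $$ (i,j)) M) (at_right 0)"
        if C: "C = A \<or> C = B" for C
      proof (rule tendsto_monoE)
        show "\<And>i j. i < n \<Longrightarrow> j < n \<Longrightarrow> ((\<lambda>x. fullmix n x M $$ (i,j)) \<longlongrightarrow> M $$ (i,j)) (at_right 0)"
          using cf unfolding convm_def by auto
        fix i j assume "i < n" "j < n"
        thus "M $$ (i,j) \<noteq> 0 \<or> 0 \<le> C $$ (i,j)" using D C unfolding diff_defined_def by force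
      qed
      thus ?thesis unfolding diff_eval_def mono_eval_E by (intro tendsto_diff) auto
    qed
    show ?thesis by (rule tendsto_lowerbound[OF lim ev]) simp
  next
    case False
    hence Z: "\<And>i j. i < n \<Longrightarrow> j < n \<Longrightarrow> M $$ (i,j) = 0" using nn by (meson not_le order.antisym)
    show ?thesis
    proof (cases "n = 0")
      case True thus ?thesis by (simp add: diff_eval_def mono_eval_def)
    next
      case False
      have nA: "\<And>i j. i < n \<Longrightarrow> j < n \<Longrightarrow> A $$ (i,j) \<ge> 0" using D Z unfolding diff_defined_def by force
      have nB: "\<And>i j. i < n \<Longrightarrow> j < n \<Longrightarrow> B $$ (i,j) \<ge> 0" using D Z unfolding diff_defined_def by force
      show ?thesis using zero_mono[OF A nA _ Z] zero_mono[OF B nB _ Z] False by (simp add: diff_eval_def)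
    qed
  qed
qed



lemma prod_list_pos: "(\<And>x. x \<in> set xs \<Longrightarrow> f x > (0::real)) \<Longrightarrow> prod_list (map f xs) > 0"
  by (induction xs) auto
lemma prod_list_nonneg: "(\<And>x. x \<in> set xs \<Longrightarrow> f x \<ge> (0::real)) \<Longrightarrow> prod_list (map f xs) \<ge> 0"
  by (induction xs) auto
lemma sum_list_nonneg': "(\<And>x. x \<in> set xs \<Longrightarrow> f x \<ge> (0::real)) \<Longrightarrow> sum_list (map f xs) \<ge> 0"
  by (induction xs) auto

lemma notle_witness: "\<not> ASM_le n A B \<Longrightarrow> \<exists>i<n. \<exists>j<n. corner_sum A i j < corner_sum B i j"
  unfolding ASM_le_def using not_le by blast

lemma TNN_imp_le:
  assumes A: "is_ASM n A" and B: "is_ASM n B" and T: "diff_TNN n A B"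
  shows "ASM_le n A B"
proof (rule ccontr)
  assume "\<not> ASM_le n A B"
  then obtain i j where i: "i < n" and j: "j < n" and lt: "corner_sum A i j < corner_sum B i j"
    using notle_witness by blast
  obtain M where M: "M \<in> carrier_mat n n" and mp: "\<forall>I J. valid_minor n I J \<longrightarrow> minor M I J > 0"
    and ep: "\<forall>p<n. \<forall>q<n. M $$ (p,q) > 0" and neg: "diff_eval n A B M < 0"
    using bad_matrix[OF A B i j lt] by blast
  have "TNN_mat n M" unfolding TNN_mat_def using M mp by (auto intro: less_imp_le)
  moreover have "diff_defined n A B M" unfolding diff_defined_def using ep by force
  ultimately have "diff_eval n A B M \<ge> 0" using T unfolding diff_TNN_def by auto
  thus False using neg by simp
qed

lemma SFL_imp_le:
  assumes A: "is_ASM n A" and B: "is_ASM n B" and S: "diff_SFL n A B"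
  shows "ASM_le n A B"
proof (rule ccontr)
  assume "\<not> ASM_le n A B"
  then obtain i j where i: "i < n" and j: "j < n" and lt: "corner_sum A i j < corner_sum B i j"
    using notle_witness by blast
  obtain M where M: "M \<in> carrier_mat n n" and mp: "\<forall>I J. valid_minor n I J \<longrightarrow> minor M I J > 0"
    and ep: "\<forall>p<n. \<forall>q<n. M $$ (p,q) > 0" and neg: "diff_eval n A B M < 0"
    using bad_matrix[OF A B i j lt] by blast
  obtain F G where vF: "\<forall>(c,ms)\<in>set F. \<forall>(I,J)\<in>set ms. valid_minor n I J"
    and vG: "\<forall>(I,J)\<in>set G. valid_minor n I J"
    and eq: "\<forall>M. M \<in> carrier_mat n n \<and> diff_defined n A B M \<and> minor_prod M G \<noteq> 0
                 \<longrightarrow> diff_eval n A B M = minor_poly M F / minor_prod M G"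
    using S unfolding diff_SFL_def by blast
  have Gp: "minor_prod M G > 0" unfolding minor_prod_def
    by (rule prod_list_pos) (use vG mp in auto)
  have Fn: "minor_poly M F \<ge> 0" unfolding minor_poly_def
  proof (rule sum_list_nonneg')
    fix x assume x: "x \<in> set F"
    obtain c ms where cms: "x = (c, ms)" by force
    have "minor_prod M ms \<ge> 0" unfolding minor_prod_def
      by (rule prod_list_nonneg) (use vF x cms mp in \<open>fastforce intro: less_imp_le\<close>)
    thus "(case x of (c, ms) \<Rightarrow> real c * minor_prod M ms) \<ge> 0" using cms by simp
  qed
  have D: "diff_defined n A B M" unfolding diff_defined_def using ep by force
  have "diff_eval n A B M = minor_poly M F / minor_prod M G" using eq M D Gp by auto
  hence "diff_eval n A B M \<ge> 0" using Fn Gp by simp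
  thus False using neg by simp
qed

theorem mainTheorem13:
  fixes n :: nat and A B :: "int mat"
  assumes "is_ASM n A" and "is_ASM n B"
  shows "(ASM_le n A B \<longleftrightarrow> diff_TNN n A B) \<and> (diff_TNN n A B \<longleftrightarrow> diff_SFL n A B)"
  using le_imp_TNN[OF assms] TNN_imp_le[OF assms] le_imp_SFL[OF assms] SFL_imp_le[OF assms] by blast


end
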